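(* Let $p\in[1,\infty)$ and $G_0\in\mathcal{P}_p(\Theta)$. Then for every neighborhood $V$ of $G_0$ in the topology of $\mathcal{P}_p(\Theta)$ induced by the Wasserstein distance $W_p$, there exist $G\in V$ and $n\in\mathbb{N}$ such that the level $n$ SBA approximation $G^{(n)}$ of $G$ belongs to $V$. Moreover, if $G_0\in\mathcal{P}_*(\Theta)$, one may take $G=G_0$, and in this case $W_p(G_0^{(n)},G_0)\to0$ as $n\to\infty$.
   Context: $\Theta\subseteq\mathbb{R}$ is either $\mathbb{R}$, a closed half-line, or a compact interval with nonempty interior. $\mathcal{P}_p(\Theta)$ is the set of Borel probability measures on $\Theta$ with finite $p$-th moment, with the Wasserstein distance $W_p(G_1,G_2)=\inf_\gamma(\iint|\theta'-\theta|^p\,d\gamma)^{1/p}$ over couplings $\gamma$ of $G_1,G_2$. $\mathcal{P}_*(\Theta)$ is the set of probability measures whose support is a non-degenerate compact interval. A measure $G$ is identified with its distribution function. For $a_1\le a_2$, $b_G(a_1,a_2]=\int_{(a_1,a_2]}\theta\,dG/(G(a_2)-G(a_1))$ if $G(a_2)>G(a_1)$ and $=a_1$ otherwise. The SBA of $G$ with finite mean: $\mu_{1,1}=\int\theta\,dG$; for $j\ge2$, $\mu_{j,2l}=\mu_{j-1,l}$ ($1\le l\le 2^{j-1}-1$), $\mu_{j,2l-1}=b_G(\mu_{j-1,l-1},\mu_{j-1,l}]$ ($1\le l\le 2^{j-1}$), with $\mu_{j,0}=\inf\Theta$, $\mu_{j,2^j}=\sup\Theta$. Level $n$ intervals: $\Theta_{n,1}=[\mu_{n,0},\mu_{n,1}]$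 if $\mu_{n,0}>-\infty$, else $(\mu_{n,0},\mu_{n,1}]$; $\Theta_{n,l}=(\mu_{n,l-1},\mu_{n,l}]$ for $2\le l\le 2^n-1$; $\Theta_{n,2^n}=(\mu_{n,2^n-1},\mu_{n,2^n}]$ if $\mu_{n,2^n}<\infty$, else $(\mu_{n,2^n-1},\infty)$. The level $n$ SBA approximation is $G^{(n)}=\sum_{l=1}^{2^n}G(\Theta_{n,l})\delta_{\mu_{n+1,2l-1}}$. *)

theory Defs
  imports "HOL-Probability.Probability"
begin

definition admissible_Theta :: "real set \<Rightarrow> bool" where
  "admissible_Theta T \<longleftrightarrow> T = UNIV \<or> (\<exists>a. T = {a..} \<or> T = {..a}) \<or> (\<exists>a b. a < b \<and> T = {a..b})"

definition Pp :: "real \<Rightarrow> real set \<Rightarrow> real measure set" where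
  "Pp p T = {G. sets G = sets borel \<and> prob_space G \<and> emeasure G (- T) = 0
                 \<and> integrable G (\<lambda>x. \<bar>x\<bar> powr p)}"

definition couplings :: "real measure \<Rightarrow> real measure \<Rightarrow> (real \<times> real) measure set" where
  "couplings G1 G2 = {\<gamma>. sets \<gamma> = sets borel \<and> prob_space \<gamma>
                         \<and> distr \<gamma> borel fst = G1 \<and> distr \<gamma> borel snd = G2}"

definition wasserstein :: "real \<Rightarrow> real measure \<Rightarrow> real measure \<Rightarrow> real" where
  "wasserstein p G1 G2 =
     (enn2real (INF \<gamma>\<in>couplings G1 G2. \<integral>\<^sup>+ z. ennreal (\<bar>snd z - fst z\<bar> powr p) \<partial>\<gamma>)) powr (1 / p)"

definition W_nhd :: "real \<Rightarrow> real set \<Rightarrow> real measure \<Rightarrow> real measure set \<Rightarrow> bool" where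
  "W_nhd p T G0 V \<longleftrightarrow> V \<subseteq> Pp p T \<and>
     (\<exists>e>0. {G \<in> Pp p T. wasserstein p G0 G < e} \<subseteq> V)"

definition support :: "real measure \<Rightarrow> real set" where
  "support G = {x. \<forall>e>0. emeasure G (ball x e) > 0}"

definition Pstar :: "real set \<Rightarrow> real measure set" where
  "Pstar T = {G. sets G = sets borel \<and> prob_space G \<and> emeasure G (- T) = 0
                 \<and> (\<exists>a b. a < b \<and> support G = {a..b})}"

definition distF :: "real measure \<Rightarrow> ereal \<Rightarrow> real" where
  "distF G a = measure G {x. ereal x \<le> a}"

definition bG :: "real measure \<Rightarrow> ereal \<Rightarrow> ereal \<Rightarrow> ereal" where
  "bG G a1 a2 =
     (if distF G a2 > distF G a1
      then ereal ((\<integral>x. indicator {x. a1 < ereal x \<and> ereal x \<le> a2} x * x \<partial>G)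
                  / (distF G a2 - distF G a1))
      else a1)"

text \<open>SBA points mu_{j,l} (j \<ge> 1); level 0 is the pair (inf Theta, sup Theta),
which is only used as an auxiliary starting point.\<close>
fun sba :: "real measure \<Rightarrow> real set \<Rightarrow> nat \<Rightarrow> nat \<Rightarrow> ereal" where
  "sba G T 0 l = (if l = 0 then Inf (ereal ` T) else Sup (ereal ` T))"
| "sba G T (Suc 0) l =
     (if l = 0 then Inf (ereal ` T) else if l = 1 then ereal (\<integral>x. x \<partial>G) else Sup (ereal ` T))"
| "sba G T (Suc (Suc j)) l =
     (if l = 0 then Inf (ereal ` T)
      else if l = 2 ^ Suc (Suc j) then Sup (ereal ` T)
      else if even l then sba G T (Suc j) (l div 2)
      else bG G (sba G T (Suc j) ((l - 1) div 2)) (sba G T (Suc j) ((l + 1) div 2)))"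

definition sba_int :: "real measure \<Rightarrow> real set \<Rightarrow> nat \<Rightarrow> nat \<Rightarrow> real set" where
  "sba_int G T n l =
     (if l = 1 \<and> sba G T n 0 > -\<infinity>
      then {x. sba G T n 0 \<le> ereal x \<and> ereal x \<le> sba G T n 1}
      else {x. sba G T n (l - 1) < ereal x \<and> ereal x \<le> sba G T n l})"

definition sba_approx :: "real measure \<Rightarrow> real set \<Rightarrow> nat \<Rightarrow> real measure" where
  "sba_approx G T n = measure_of UNIV (sets borel)
     (\<lambda>A. \<Sum>l\<in>{1..2^n}. ennreal (measure G (sba_int G T n l))
            * indicator A (real_of_ereal (sba G T (Suc n) (2 * l - 1))))"

end

theory Submission
  imports Defs
begin


lemma Sup_ereal_unb: assumes "\<And>r. \<exists>x\<in>S. r < x" shows "Sup (ereal ` S) = \<infinity>"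
proof -
  have "\<forall>y<top. \<exists>i\<in>ereal ` S. y < i"
  proof (intro allI impI)
    fix y :: ereal assume "y < top"
    show "\<exists>i\<in>ereal ` S. y < i"
    proof (cases y)
      case (real r) then obtain x where "x \<in> S" "r < x" using assms by blast
      then show ?thesis using real by auto
    next
      case PInf then show ?thesis using \<open>y < top\<close> by simp
    next
      case MInf then obtain x where "x \<in> S" using assms by blast
      then show ?thesis using MInf by auto
    qed
  qed
  then show ?thesis using Sup_eq_top_iff top_ereal_def by metis
qed

lemma Inf_ereal_unb: assumes "\<And>r. \<exists>x\<in>S. x < r" shows "Inf (ereal ` S) = -\<infinity>"
proof -
  have "\<forall>y>bot. \<exists>i\<in>ereal ` S. i < y"
  proof (intro allI impI)
    fix y :: ereal assume "y > bot"
    show "\<exists>i\<in>ereal ` S. i < y"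
    proof (cases y)
      case (real r) then obtain x where "x \<in> S" "x < r" using assms by blast
      then show ?thesis using real by auto
    next
      case MInf then show ?thesis using \<open>y > bot\<close> by (simp add: bot_ereal_def)
    next
      case PInf then obtain x where "x \<in> S" using assms by blast
      then show ?thesis using PInf by auto
    qed
  qed
  then show ?thesis using Inf_eq_bot_iff bot_ereal_def by metis
qed

lemma Inf_ereal_min: assumes "a \<in> S" "\<And>x. x \<in> S \<Longrightarrow> a \<le> x" shows "Inf (ereal ` S) = ereal a"
  by (rule Inf_eqI) (use assms in auto)

lemma Sup_ereal_max: assumes "a \<in> S" "\<And>x. x \<in> S \<Longrightarrow> x \<le> a" shows "Sup (ereal ` S) = ereal a"
  by (rule Sup_eqI) (use assms in auto)

lemma adm_props_all:
  assumes "admissible_Theta T"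
  shows "T = {x. Inf (ereal ` T) \<le> ereal x \<and> ereal x \<le> Sup (ereal ` T)} \<and>
    Inf (ereal ` T) < Sup (ereal ` T) \<and> closed T \<and> convex T \<and>
    (\<exists>z\<in>T. Inf (ereal ` T) < ereal z \<and> ereal z < Sup (ereal ` T))"
  using assms unfolding admissible_Theta_def
proof (elim disjE exE conjE)
  assume T: "T = UNIV"
  have i: "Inf (ereal ` T) = -\<infinity>" unfolding T by (rule Inf_ereal_unb) (simp add: lt_ex)
  have s: "Sup (ereal ` T) = \<infinity>" unfolding T by (rule Sup_ereal_unb) (simp add: gt_ex)
  have e1: "T = {x. Inf (ereal ` T) \<le> ereal x \<and> ereal x \<le> Sup (ereal ` T)}"
    unfolding i s unfolding T by auto
  have e2: "Inf (ereal ` T) < Sup (ereal ` T)" unfolding i s by simp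
  have e3: "closed T" "convex T" unfolding T by (auto intro: convex_real_interval)
  have e4: "0 \<in> T" "Inf (ereal ` T) < ereal (0)" "ereal (0) < Sup (ereal ` T)"
    unfolding i s using T by auto
  show ?thesis using e1 e2 e3 e4 by blast
next
  fix a assume T: "T = {a..}"
  have i: "Inf (ereal ` T) = a" unfolding T by (rule Inf_ereal_min) auto
  have s: "Sup (ereal ` T) = \<infinity>" unfolding T
    proof (rule Sup_ereal_unb)
    fix r show "\<exists>x\<in>{a..}. r < x" by (rule bexI[of _ "max a (r+1)"]) auto
  qed
  have e1: "T = {x. Inf (ereal ` T) \<le> ereal x \<and> ereal x \<le> Sup (ereal ` T)}"
    unfolding i s unfolding T by auto
  have e2: "Inf (ereal ` T) < Sup (ereal ` T)" unfolding i s by simp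
  have e3: "closed T" "convex T" unfolding T by (auto intro: convex_real_interval)
  have e4: "a+1 \<in> T" "Inf (ereal ` T) < ereal (a+1)" "ereal (a+1) < Sup (ereal ` T)"
    unfolding i s using T by auto
  show ?thesis using e1 e2 e3 e4 by blast
next
  fix a assume T: "T = {..a}"
  have i: "Inf (ereal ` T) = -\<infinity>" unfolding T
    proof (rule Inf_ereal_unb)
    fix r show "\<exists>x\<in>{..a}. x < r" by (rule bexI[of _ "min a (r-1)"]) auto
  qed
  have s: "Sup (ereal ` T) = a" unfolding T by (rule Sup_ereal_max) auto
  have e1: "T = {x. Inf (ereal ` T) \<le> ereal x \<and> ereal x \<le> Sup (ereal ` T)}"
    unfolding i s unfolding T by auto
  have e2: "Inf (ereal ` T) < Sup (ereal ` T)" unfolding i s by simp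
  have e3: "closed T" "convex T" unfolding T by (auto intro: convex_real_interval)
  have e4: "a-1 \<in> T" "Inf (ereal ` T) < ereal (a-1)" "ereal (a-1) < Sup (ereal ` T)"
    unfolding i s using T by auto
  show ?thesis using e1 e2 e3 e4 by blast
next
  fix a b assume ab: "a < b" and T: "T = {a..b}"
  have i: "Inf (ereal ` T) = a" unfolding T by (rule Inf_ereal_min) (use ab in auto)
  have s: "Sup (ereal ` T) = b" unfolding T by (rule Sup_ereal_max) (use ab in auto)
  have e1: "T = {x. Inf (ereal ` T) \<le> ereal x \<and> ereal x \<le> Sup (ereal ` T)}"
    unfolding i s unfolding T by auto
  have e2: "Inf (ereal ` T) < Sup (ereal ` T)" unfolding i s using ab by simp
  have e3: "closed T" "convex T" unfolding T by (auto intro: convex_real_interval)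
  have e4: "(a+b)/2 \<in> T" "Inf (ereal ` T) < ereal ((a+b)/2)" "ereal ((a+b)/2) < Sup (ereal ` T)"
    unfolding i s using ab T by auto
  show ?thesis using e1 e2 e3 e4 by blast
qed

lemma adm_props:
  assumes "admissible_Theta T"
  shows "T = {x. Inf (ereal ` T) \<le> ereal x \<and> ereal x \<le> Sup (ereal ` T)}"
    and "Inf (ereal ` T) < Sup (ereal ` T)"
    and "closed T" and "convex T"
    and "\<exists>z\<in>T. Inf (ereal ` T) < ereal z \<and> ereal z < Sup (ereal ` T)"
  using adm_props_all[OF assms] by auto

definition eIoc :: "ereal \<Rightarrow> ereal \<Rightarrow> real set" where
  "eIoc a b = {x. a < ereal x \<and> ereal x \<le> b}"

lemma ereal_le_set_borel: "{x. ereal x \<le> a} \<in> sets borel"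
proof (cases a)
  case (real r)
  then have "{x. ereal x \<le> a} = {..r}" by auto
  then show ?thesis by simp
qed auto

lemma ereal_less_set_borel: "{x. a < ereal x} \<in> sets borel"
proof -
  have "{x. a < ereal x} = space borel - {x. ereal x \<le> a}" by auto
  then show ?thesis using sets.compl_sets[OF ereal_le_set_borel[of a]] by simp
qed

lemma eIoc_borel[measurable]: "eIoc a b \<in> sets borel"
proof -
  have "eIoc a b = {x. a < ereal x} \<inter> {x. ereal x \<le> b}" unfolding eIoc_def by auto
  then show ?thesis using ereal_le_set_borel ereal_less_set_borel by auto
qed

locale sbaset =
  fixes G :: "real measure" and T :: "real set"
  assumes adm: "admissible_Theta T" and sets_G: "sets G = sets borel"
    and prob: "prob_space G" and nullT: "emeasure G (-T) = 0"
    and intx: "integrable G (\<lambda>x. x)"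
begin

sublocale prob_space G by (rule prob)

abbreviation "Ai \<equiv> Inf (ereal ` T)"
abbreviation "Bs \<equiv> Sup (ereal ` T)"
abbreviation "mu \<equiv> sba G T"

lemma space_G: "space G = UNIV"
  using sets_G sets_eq_imp_space_eq by fastforce

lemma sets_G_iff[simp]: "A \<in> sets G \<longleftrightarrow> A \<in> sets borel"
  using sets_G by simp

lemma T_eq: "T = {x. Ai \<le> ereal x \<and> ereal x \<le> Bs}" using adm_props(1)[OF adm] .
lemma Ai_Bs: "Ai < Bs" using adm_props(2)[OF adm] .
lemma T_closed: "closed T" using adm_props(3)[OF adm] .
lemma T_convex: "convex T" using adm_props(4)[OF adm] .
lemma T_borel[measurable]: "T \<in> sets borel" using T_closed by (simp add: borel_closed)

lemma AE_T: "AE x in G. x \<in> T"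
proof -
  have "-T \<in> null_sets G" using nullT by (simp add: null_sets_def T_borel sets.compl_sets)
  then show ?thesis by (rule AE_I') auto
qed

lemma mu_0[simp]: "mu n 0 = Ai"
proof (cases n)
  case (Suc k) then show ?thesis by (cases k) auto
qed simp

lemma mu_top[simp]: "mu n (2^n) = Bs"
proof (cases n)
  case (Suc k) then show ?thesis by (cases k) auto
qed simp

lemma mu_even: assumes "i \<le> 2^k" shows "mu (Suc k) (2*i) = mu k i"
proof (cases k)
  case 0 then show ?thesis using assms by (cases i) auto
next
  case (Suc j)
  show ?thesis
  proof (cases "i = 0")
    case True then show ?thesis by simp
  next
    case False
    show ?thesis
    proof (cases "i = 2^k")
      case True
      have a: "mu k i = Bs" using True by simp
      have "mu (Suc k) (2^Suc k) = Bs" by (rule mu_top)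
      then have "mu (Suc k) (2*i) = Bs" using True by (simp del: mu_top)
      then show ?thesis using a by simp
    next
      case False
      then have "2*i \<noteq> 2^Suc k" by simp
      then show ?thesis using Suc \<open>i \<noteq> 0\<close> by simp
    qed
  qed
qed

lemma mu_odd: assumes "1 \<le> k" "1 \<le> i" "i \<le> 2^k"
  shows "mu (Suc k) (2*i - 1) = bG G (mu k (i-1)) (mu k i)"
proof -
  obtain j where k: "k = Suc j" using assms by (cases k) auto
  have odd: "odd (2*i - 1)" using assms by simp
  have ne: "2*i - 1 \<noteq> 2 ^ Suc (Suc j)" using odd by (metis dvd_power even_numeral zero_less_Suc)
  have d1: "(2*i - 1 - 1) div 2 = i - 1" and d2: "(2*i - 1 + 1) div 2 = i" using assms by auto
  show ?thesis using assms ne odd d1 d2 unfolding k by (simp del: power_Suc)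
qed

lemma distF_borel: "{x. ereal x \<le> a} \<in> sets G" using ereal_le_set_borel by simp

lemma distF_diff: assumes "a \<le> b"
  shows "distF G b - distF G a = measure G (eIoc a b)"
proof -
  have "eIoc a b = {x. ereal x \<le> b} - {x. ereal x \<le> a}" unfolding eIoc_def by auto
  moreover have "{x. ereal x \<le> a} \<subseteq> {x. ereal x \<le> b}" using assms by auto
  ultimately show ?thesis unfolding distF_def
    using finite_measure_Diff[OF distF_borel distF_borel] by simp
qed

lemma integrable_ind: "integrable G (\<lambda>x. indicator (eIoc a b) x * x)"
  using integrable_mult_indicator[of "eIoc a b" G "\<lambda>x. x"] intx by simp

lemma bG_eq: assumes "a \<le> b"
  shows "bG G a b = (if measure G (eIoc a b) > 0
     then ereal ((\<integral>x. indicator (eIoc a b) x * x \<partial>G) / measure G (eIoc a b)) else a)"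
  using distF_diff[OF assms] unfolding bG_def eIoc_def by simp


lemma int_ind_const: "(\<integral>x. indicator (eIoc a b) x * r \<partial>G) = r * measure G (eIoc a b)"
  by (simp add: space_G)

lemma integrable_ind_const: "integrable G (\<lambda>x. indicator (eIoc a b) x * (r::real))"
  using integrable_mult_indicator[of "eIoc a b" G "\<lambda>x. r"] by simp

lemma mean_ge: assumes "AE x in G. x \<in> eIoc a b \<longrightarrow> r \<le> x"
  shows "r * measure G (eIoc a b) \<le> (\<integral>x. indicator (eIoc a b) x * x \<partial>G)"
proof -
  have "(\<integral>x. indicator (eIoc a b) x * r \<partial>G) \<le> (\<integral>x. indicator (eIoc a b) x * x \<partial>G)"
    by (intro integral_mono_AE integrable_ind_const integrable_ind)
       (use assms in \<open>auto elim!: AE_mp intro!: AE_I2 simp: indicator_def\<close>)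
  then show ?thesis unfolding int_ind_const .
qed

lemma mean_le: assumes "AE x in G. x \<in> eIoc a b \<longrightarrow> x \<le> r"
  shows "(\<integral>x. indicator (eIoc a b) x * x \<partial>G) \<le> r * measure G (eIoc a b)"
proof -
  have "(\<integral>x. indicator (eIoc a b) x * x \<partial>G) \<le> (\<integral>x. indicator (eIoc a b) x * r \<partial>G)"
    by (intro integral_mono_AE integrable_ind_const integrable_ind)
       (use assms in \<open>auto elim!: AE_mp intro!: AE_I2 simp: indicator_def\<close>)
  then show ?thesis unfolding int_ind_const .
qed

lemma bG_between: assumes "a \<le> b" shows "a \<le> bG G a b" "bG G a b \<le> b"
proof -
  let ?P = "measure G (eIoc a b)" and ?I = "\<integral>x. indicator (eIoc a b) x * x \<partial>G"
  have "a \<le> bG G a b \<and> bG G a b \<le> b"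
  proof (cases "?P > 0")
    case False then show ?thesis using assms bG_eq[OF assms] by simp
  next
    case P: True
    have lo: "a \<le> ereal (?I / ?P)"
    proof (cases a)
      case (real r)
      have "r * ?P \<le> ?I" by (rule mean_ge) (auto simp: eIoc_def real)
      then show ?thesis using P real by (simp add: field_simps)
    qed (use P assms in \<open>auto simp: eIoc_def\<close>)
    have hi: "ereal (?I / ?P) \<le> b"
    proof (cases b)
      case (real r)
      have "?I \<le> r * ?P" by (rule mean_le) (auto simp: eIoc_def real)
      then show ?thesis using P real by (simp add: field_simps)
    qed (use P assms in \<open>auto simp: eIoc_def\<close>)
    show ?thesis using lo hi P bG_eq[OF assms] by simp
  qed
  then show "a \<le> bG G a b" "bG G a b \<le> b" by auto
qed

lemma mean_T: "Ai \<le> ereal (\<integral>x. x \<partial>G)" "ereal (\<integral>x. x \<partial>G) \<le> Bs"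
proof -
  show "Ai \<le> ereal (\<integral>x. x \<partial>G)"
  proof (cases Ai)
    case (real r)
    have "(\<integral>x. r \<partial>G) \<le> (\<integral>x. x \<partial>G)"
      by (intro integral_mono_AE intx) (use AE_T real T_eq in \<open>auto elim!: AE_mp\<close>)
    then show ?thesis using real by (simp add: prob_space)
  next
    case MInf then show ?thesis by simp
  next
    case PInf then show ?thesis using Ai_Bs by simp
  qed
  show "ereal (\<integral>x. x \<partial>G) \<le> Bs"
  proof (cases Bs)
    case (real r)
    have "(\<integral>x. x \<partial>G) \<le> (\<integral>x. r \<partial>G)"
      by (intro integral_mono_AE intx) (use AE_T real T_eq in \<open>auto elim!: AE_mp\<close>)
    then show ?thesis using real by (simp add: prob_space)
  next
    case PInf then show ?thesis by simp
  next
    case MInf then show ?thesis using Ai_Bs by simp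
  qed
qed

lemma mu_mono_step: "l < 2^n \<Longrightarrow> mu n l \<le> mu n (Suc l)"
proof (induction n arbitrary: l)
  case 0 then show ?case using Ai_Bs by simp
next
  case (Suc k)
  show ?case
  proof (cases "k = 0")
    case True
    then have "l = 0 \<or> l = 1" using Suc.prems by auto
    then show ?thesis using True mean_T by auto
  next
    case k: False
    show ?thesis
    proof (cases "even l")
      case True
      then obtain i where l: "l = 2*i" by blast
      have i: "i < 2^k" using Suc.prems l by simp
      have e1: "mu (Suc k) l = mu k i" using mu_even[of i k] i l by simp
      have e2: "mu (Suc k) (Suc l) = bG G (mu k i) (mu k (Suc i))"
        using mu_odd[of k "Suc i"] i l k by simp
      show ?thesis using e1 e2 bG_between(1) Suc.IH[OF i] by simp
    next
      case False
      then obtain i where l: "l = 2*i + 1" using oddE by blast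
      have i: "i < 2^k" using Suc.prems l by simp
      have e1: "mu (Suc k) (Suc l) = mu k (Suc i)" using mu_even[of "Suc i" k] i l by simp
      have e2: "mu (Suc k) l = bG G (mu k i) (mu k (Suc i))"
        using mu_odd[of k "Suc i"] i l k by simp
      show ?thesis using e1 e2 bG_between(2) Suc.IH[OF i] by simp
    qed
  qed
qed

lemma mu_mono: assumes "i \<le> j" "j \<le> 2^n" shows "mu n i \<le> mu n j"
  using assms
proof (induction j rule: dec_induct)
  case base then show ?case by simp
next
  case (step j) then show ?case using mu_mono_step[of j n] order_trans by fastforce
qed

lemma mu_ge_Ai: "l \<le> 2^n \<Longrightarrow> Ai \<le> mu n l" using mu_mono[of 0 l n] by simp
lemma mu_le_Bs: "l \<le> 2^n \<Longrightarrow> mu n l \<le> Bs" using mu_mono[of l "2^n" n] by simp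


abbreviation "cell n l \<equiv> sba_int G T n l"

lemma cell_eq: assumes "1 \<le> l"
  shows "cell n l = {x. (mu n (l-1) < ereal x \<or> (l = 1 \<and> ereal x = Ai)) \<and> ereal x \<le> mu n l}"
proof (cases "l = 1")
  case True
  then show ?thesis unfolding sba_int_def by (cases Ai) auto
next
  case False then show ?thesis unfolding sba_int_def by auto
qed

lemma ereal_eq_set_borel: "{x. ereal x = a} \<in> sets borel"
  by (cases a) auto

lemma cell_borel[measurable]: assumes "1 \<le> l" shows "cell n l \<in> sets borel"
proof -
  have "cell n l = eIoc (mu n (l-1)) (mu n l) \<union> ({x. ereal x = Ai} \<inter> {x. ereal x \<le> mu n l} \<inter> {x. l = 1})"
    unfolding cell_eq[OF assms] eIoc_def by auto
  then show ?thesis using ereal_eq_set_borel[of Ai] ereal_le_set_borel[of "mu n l"] by auto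
qed

lemma eIoc_sub_cell: "1 \<le> l \<Longrightarrow> eIoc (mu n (l-1)) (mu n l) \<subseteq> cell n l"
  unfolding cell_eq eIoc_def by auto

lemma cell_sub: "1 \<le> l \<Longrightarrow> cell n l \<subseteq> eIoc (mu n (l-1)) (mu n l) \<union> {x. ereal x = Ai}"
  unfolding cell_eq eIoc_def by auto

lemma cell_disj: assumes "1 \<le> i" "i < j" "j \<le> 2^n" shows "cell n i \<inter> cell n j = {}"
proof -
  have "mu n i \<le> mu n (j-1)" using assms by (intro mu_mono) auto
  then show ?thesis unfolding cell_eq[OF assms(1)] using assms by (auto simp: cell_eq)
qed

lemma cell_disj': assumes "i \<in> {1..2^n}" "j \<in> {1..2^n}" "i \<noteq> j" shows "cell n i \<inter> cell n j = {}"
  using cell_disj[of i j n] cell_disj[of j i n] assms by (cases "i < j") auto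

lemma cell_cover: assumes "x \<in> T" shows "\<exists>l\<in>{1..2^n}. x \<in> cell n l"
proof -
  have xT: "Ai \<le> ereal x" "ereal x \<le> Bs" using assms T_eq by auto
  define l0 where "l0 = (LEAST l. ereal x \<le> mu n l)"
  have ex: "ereal x \<le> mu n (2^n)" using xT by simp
  have l0a: "ereal x \<le> mu n l0" unfolding l0_def using ex by (rule LeastI)
  have l0b: "l0 \<le> 2^n" unfolding l0_def using ex by (rule Least_le)
  show ?thesis
  proof (cases "l0 = 0")
    case True
    then have "ereal x = Ai" using l0a xT by simp
    moreover have "Ai \<le> mu n 1" using mu_ge_Ai[of 1 n] by simp
    ultimately have "x \<in> cell n 1" by (simp add: cell_eq)
    moreover have "(1::nat) \<in> {1..2^n}" by simp
    ultimately show ?thesis by blast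
  next
    case False
    have "\<not> ereal x \<le> mu n (l0 - 1)"
    proof
      assume "ereal x \<le> mu n (l0 - 1)"
      then have "l0 \<le> l0 - 1" unfolding l0_def by (rule Least_le)
      then show False using False by simp
    qed
    then have "x \<in> cell n l0" using l0a False by (simp add: cell_eq not_le)
    moreover have "l0 \<in> {1..2^n}" using False l0b by simp
    ultimately show ?thesis by blast
  qed
qed

lemma cover': "x \<in> T \<Longrightarrow> x \<in> (\<Union>l\<in>{1..2^n}. cell n l)"
  using cell_cover[of x n] by blast

definition atom :: "nat \<Rightarrow> nat \<Rightarrow> real" where
  "atom n l = real_of_ereal (mu (Suc n) (2*l - 1))"

definition fn :: "nat \<Rightarrow> real \<Rightarrow> real" where
  "fn n x = (\<Sum>l\<in>{1..2^n}. indicator (cell n l) x * atom n l)"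

lemma fn_borel[measurable]: "fn n \<in> borel_measurable borel"
  unfolding fn_def
  by (intro borel_measurable_sum borel_measurable_times borel_measurable_indicator borel_measurable_const) auto

lemma fn_G[measurable]: "fn n \<in> borel_measurable G"
  by (subst measurable_cong_sets[OF sets_G refl]) (rule fn_borel)

lemma fn_cell: assumes "l \<in> {1..2^n}" "x \<in> cell n l" shows "fn n x = atom n l"
proof -
  have "fn n x = indicator (cell n l) x * atom n l + (\<Sum>j\<in>{1..2^n} - {l}. indicator (cell n j) x * atom n j)"
    unfolding fn_def using assms(1) by (intro sum.remove) auto
  also have "(\<Sum>j\<in>{1..2^n} - {l}. indicator (cell n j) x * atom n j) = 0"
  proof (intro sum.neutral ballI)
    fix j assume j: "j \<in> {1..2^n} - {l}"
    then have "x \<notin> cell n j" using cell_disj'[of l n j] assms by auto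
    then show "indicator (cell n j) x * atom n j = 0" by simp
  qed
  finally show ?thesis using assms by simp
qed


lemma approx_emeasure: assumes A: "A \<in> sets borel"
  shows "(\<Sum>l\<in>{1..2^n}. ennreal (measure G (cell n l)) * indicator A (atom n l))
       = emeasure (distr G borel (fn n)) A"
proof -
  let ?U = "\<Union>l\<in>{1..2^n}. cell n l"
  let ?L = "{l\<in>{1..2^n}. atom n l \<in> A}"
  have Ub: "?U \<in> sets borel" by (intro sets.finite_UN) auto
  have pre: "fn n -` A \<in> sets borel" using measurable_sets[OF fn_borel A] by simp
  have "emeasure (distr G borel (fn n)) A = emeasure G (fn n -` A)"
    using emeasure_distr[OF fn_G A] by (simp add: space_G)
  also have "\<dots> = emeasure G (fn n -` A \<inter> ?U)"
  proof (rule emeasure_eq_AE)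
    show "AE x in G. (x \<in> fn n -` A) = (x \<in> fn n -` A \<inter> ?U)"
      using AE_T by (elim AE_mp) (intro AE_I2 impI; use cover'[of _ n] in blast)
  qed (use pre Ub in auto)
  also have "fn n -` A \<inter> ?U = (\<Union>l\<in>?L. cell n l)"
    using fn_cell by fastforce
  also have "emeasure G (\<Union>l\<in>?L. cell n l) = (\<Sum>l\<in>?L. emeasure G (cell n l))"
  proof (rule sum_emeasure[symmetric])
    show "disjoint_family_on (cell n) ?L"
      unfolding disjoint_family_on_def using cell_disj' by auto
  qed auto
  also have "\<dots> = (\<Sum>l\<in>{1..2^n}. if atom n l \<in> A then emeasure G (cell n l) else 0)"
    by (rule sum.inter_filter) auto
  also have "\<dots> = (\<Sum>l\<in>{1..2^n}. ennreal (measure G (cell n l)) * indicator A (atom n l))"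
    by (intro sum.cong) (auto simp: emeasure_eq_measure)
  finally show ?thesis by simp
qed

lemma approx_eq: "sba_approx G T n = distr G borel (fn n)"
proof -
  let ?D = "distr G borel (fn n)"
  have "sba_approx G T n = measure_of UNIV (sets borel) (emeasure ?D)"
    unfolding sba_approx_def
    apply (rule measure_of_eq)
    apply simp
    using approx_emeasure sets.sigma_sets_eq[of "borel :: real measure"] by (simp add: atom_def)
  also have "\<dots> = ?D" using measure_of_of_measure[of ?D] by simp
  finally show ?thesis .
qed

end


lemma pair_meas: 
  fixes f g :: "real \<Rightarrow> real"
  assumes "f \<in> borel_measurable borel" "g \<in> borel_measurable borel"
  shows "(\<lambda>x. (f x, g x)) \<in> borel \<rightarrow>\<^sub>M (borel :: (real \<times> real) measure)"
  using assms by measurable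

lemma fst_meas: "fst \<in> (borel :: (real \<times> real) measure) \<rightarrow>\<^sub>M borel" unfolding borel_prod[symmetric] by (rule measurable_fst)
lemma snd_meas: "snd \<in> (borel :: (real \<times> real) measure) \<rightarrow>\<^sub>M borel" unfolding borel_prod[symmetric] by (rule measurable_snd)

lemma wass_bound:
  fixes M :: "real measure" and f g :: "real \<Rightarrow> real"
  assumes M: "prob_space M" "sets M = sets borel"
    and fm: "f \<in> borel_measurable borel" and gm: "g \<in> borel_measurable borel"
    and p: "p > 0"
    and fin: "(\<integral>\<^sup>+x. ennreal (\<bar>g x - f x\<bar> powr p) \<partial>M) < \<infinity>"
  shows "wasserstein p (distr M borel f) (distr M borel g)
     \<le> (enn2real (\<integral>\<^sup>+x. ennreal (\<bar>g x - f x\<bar> powr p) \<partial>M)) powr (1/p)"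
proof -
  have fM: "f \<in> M \<rightarrow>\<^sub>M borel" by (subst measurable_cong_sets[OF M(2) refl]) (rule fm)
  have gM: "g \<in> M \<rightarrow>\<^sub>M borel" by (subst measurable_cong_sets[OF M(2) refl]) (rule gm)
  have hM: "(\<lambda>x. (f x, g x)) \<in> M \<rightarrow>\<^sub>M (borel :: (real \<times> real) measure)"
    by (subst measurable_cong_sets[OF M(2) refl]) (rule pair_meas[OF fm gm])
  define \<gamma> where "\<gamma> = distr M (borel :: (real \<times> real) measure) (\<lambda>x. (f x, g x))"
  have c: "\<gamma> \<in> couplings (distr M borel f) (distr M borel g)"
    unfolding couplings_def
  proof (intro CollectI conjI)
    show "sets \<gamma> = sets borel" unfolding \<gamma>_def by simp
    show "prob_space \<gamma>" unfolding \<gamma>_def using prob_space.prob_space_distr[OF M(1) hM] .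
    show "distr \<gamma> borel fst = distr M borel f"
      unfolding \<gamma>_def using distr_distr[OF fst_meas hM] by (simp add: comp_def)
    show "distr \<gamma> borel snd = distr M borel g"
      unfolding \<gamma>_def using distr_distr[OF snd_meas hM] by (simp add: comp_def)
  qed
  have cost: "(\<integral>\<^sup>+z. ennreal (\<bar>snd z - fst z\<bar> powr p) \<partial>\<gamma>) = (\<integral>\<^sup>+x. ennreal (\<bar>g x - f x\<bar> powr p) \<partial>M)"
  proof -
    have d: "(\<lambda>z::real\<times>real. snd z - fst z) \<in> borel_measurable borel"
      using fst_meas snd_meas by (rule borel_measurable_diff[rotated])
    have q: "(\<lambda>t::real. ennreal (\<bar>t\<bar> powr p)) \<in> borel_measurable borel" by measurable
    have "(\<lambda>z::real\<times>real. ennreal (\<bar>snd z - fst z\<bar> powr p)) \<in> borel_measurable borel"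
      using measurable_compose[OF d q] by (simp add: comp_def)
    then show ?thesis unfolding \<gamma>_def by (subst nn_integral_distr[OF hM]) auto
  qed
  have "(INF \<gamma>\<in>couplings (distr M borel f) (distr M borel g). \<integral>\<^sup>+ z. ennreal (\<bar>snd z - fst z\<bar> powr p) \<partial>\<gamma>)
      \<le> (\<integral>\<^sup>+x. ennreal (\<bar>g x - f x\<bar> powr p) \<partial>M)"
  proof -
    have "(INF \<gamma>\<in>couplings (distr M borel f) (distr M borel g). \<integral>\<^sup>+ z. ennreal (\<bar>snd z - fst z\<bar> powr p) \<partial>\<gamma>)
      \<le> (\<integral>\<^sup>+ z. ennreal (\<bar>snd z - fst z\<bar> powr p) \<partial>\<gamma>)" by (rule INF_lower[OF c])
    then show ?thesis unfolding cost .
  qed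
  then have "enn2real (INF \<gamma>\<in>couplings (distr M borel f) (distr M borel g). \<integral>\<^sup>+ z. ennreal (\<bar>snd z - fst z\<bar> powr p) \<partial>\<gamma>)
      \<le> enn2real (\<integral>\<^sup>+x. ennreal (\<bar>g x - f x\<bar> powr p) \<partial>M)"
    using fin by (intro enn2real_mono) auto
  then show ?thesis unfolding wasserstein_def using p by (intro powr_mono2) auto
qed


definition clo :: "real \<Rightarrow> ereal \<Rightarrow> real" where
  "clo c e = (if e \<le> ereal c then c else real_of_ereal e)"
definition chi :: "real \<Rightarrow> ereal \<Rightarrow> real" where
  "chi d e = (if ereal d \<le> e then d else real_of_ereal e)"

lemma clo_props: assumes "e \<le> ereal x" "c \<le> x"
  shows "c \<le> clo c e" "e \<le> ereal (clo c e)" "clo c e \<le> x"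
    "\<And>y. c \<le> y \<Longrightarrow> e < ereal y \<Longrightarrow> clo c e \<le> y"
  using assms unfolding clo_def by (cases e; auto)+

lemma clo_mono: assumes "e \<le> e'" "e' \<le> ereal x" shows "clo c e \<le> clo c e'"
  using assms unfolding clo_def by (cases e; cases e'; auto)

lemma clo_real: "clo c (ereal t) \<ge> t" unfolding clo_def by auto

lemma chi_props: assumes "ereal x \<le> e" "x \<le> d"
  shows "chi d e \<le> d" "ereal (chi d e) \<le> e" "x \<le> chi d e"
    "\<And>y. y \<le> d \<Longrightarrow> ereal y \<le> e \<Longrightarrow> y \<le> chi d e"
  using assms unfolding chi_def by (cases e; auto)+

lemma chi_mono: assumes "e' \<le> e" "ereal x \<le> e'" shows "chi d e' \<le> chi d e"
  using assms unfolding chi_def by (cases e; cases e'; auto)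

lemma chi_real: "chi d (ereal t) \<le> t" unfolding chi_def by auto

context sbaset
begin

primrec path :: "real \<Rightarrow> nat \<Rightarrow> nat" where
  "path x 0 = 1"
| "path x (Suc k) = (if ereal x \<le> mu (Suc k) (2 * path x k - 1) then 2 * path x k - 1 else 2 * path x k)"

lemma path_inv: assumes "x \<in> T"
  shows "1 \<le> path x k \<and> path x k \<le> 2^k \<and>
    (mu k (path x k - 1) < ereal x \<or> (path x k = 1 \<and> ereal x = Ai)) \<and> ereal x \<le> mu k (path x k)"
proof (induction k)
  case 0
  have a: "Ai \<le> ereal x" "ereal x \<le> Bs" using assms T_eq by auto
  then show ?case by (auto simp: le_less)
next
  case (Suc k)
  define q where "q = path x k"
  have q: "1 \<le> q" "q \<le> 2^k" using Suc q_def by auto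
  have e1: "mu (Suc k) (2*(q-1)) = mu k (q-1)" using q by (intro mu_even) auto
  have e2: "mu (Suc k) (2*q) = mu k q" using q by (intro mu_even) auto
  show ?case
  proof (cases "ereal x \<le> mu (Suc k) (2 * q - 1)")
    case True
    then have p: "path x (Suc k) = 2*q - 1" by (simp add: q_def)
    have "2*q - 1 - 1 = 2*(q-1)" by simp
    then show ?thesis using p True Suc q e1 unfolding q_def by auto
  next
    case False
    then have p: "path x (Suc k) = 2*q" by (simp add: q_def)
    have "2*q - 1 = 2*q - 1" by simp
    then show ?thesis using p False Suc q e2 unfolding q_def by (auto simp: not_le)
  qed
qed

abbreviation "Lp x k \<equiv> mu k (path x k - 1)"
abbreviation "Rp x k \<equiv> mu k (path x k)"
abbreviation "mp x k \<equiv> mu (Suc k) (2 * path x k - 1)"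

lemma path_cell: "x \<in> T \<Longrightarrow> x \<in> cell k (path x k)"
  using path_inv[of x k] by (simp add: cell_eq)

lemma fn_path: "x \<in> T \<Longrightarrow> fn n x = real_of_ereal (mp x n)"
  using fn_cell[of "path x n" n x] path_inv[of x n] path_cell[of x n] by (simp add: atom_def)

lemma path_L_R: assumes "x \<in> T"
  shows "Lp x (Suc k) = (if ereal x \<le> mp x k then Lp x k else mp x k)"
    "Rp x (Suc k) = (if ereal x \<le> mp x k then mp x k else Rp x k)"
proof -
  define q where "q = path x k"
  have q: "1 \<le> q" "q \<le> 2^k" using path_inv[OF assms, of k] q_def by auto
  have e1: "mu (Suc k) (2*(q-1)) = mu k (q-1)" using q by (intro mu_even) auto
  have e2: "mu (Suc k) (2*q) = mu k q" using q by (intro mu_even) auto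
  have "2*q - 1 - 1 = 2*(q-1)" by simp
  then show "Lp x (Suc k) = (if ereal x \<le> mp x k then Lp x k else mp x k)"
    "Rp x (Suc k) = (if ereal x \<le> mp x k then mp x k else Rp x k)"
    using e1 e2 unfolding q_def by auto
qed

lemma mp_bG: assumes "x \<in> T" "1 \<le> k" shows "mp x k = bG G (Lp x k) (Rp x k)"
  using path_inv[OF assms(1), of k] assms by (intro mu_odd) auto

lemma mp_between: assumes "x \<in> T" shows "Lp x k \<le> mp x k" "mp x k \<le> Rp x k"
proof -
  define q where "q = path x k"
  have q: "1 \<le> q" "q \<le> 2^k" using path_inv[OF assms, of k] q_def by auto
  have e1: "mu (Suc k) (2*(q-1)) = mu k (q-1)" using q by (intro mu_even) auto
  have e2: "mu (Suc k) (2*q) = mu k q" using q by (intro mu_even) auto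
  have "mu (Suc k) (2*(q-1)) \<le> mu (Suc k) (2*q - 1)" using q by (intro mu_mono) auto
  then show "Lp x k \<le> mp x k" using e1 unfolding q_def by simp
  have "mu (Suc k) (2*q - 1) \<le> mu (Suc k) (2*q)" using q by (intro mu_mono) auto
  then show "mp x k \<le> Rp x k" using e2 unfolding q_def by simp
qed

lemma path_mono: assumes "x \<in> T" shows "Lp x k \<le> Lp x (Suc k)" "Rp x (Suc k) \<le> Rp x k"
  using path_L_R[OF assms, of k] mp_between[OF assms, of k] by auto


lemma ball_borel': "ball (z::real) r \<in> sets G" by simp

lemma prob_UNIV[simp]: "prob UNIV = 1" using prob_space space_G by simp

lemma shrink:
  fixes L R :: "nat \<Rightarrow> ereal" and x c d :: real
  assumes cd: "c \<le> x" "x \<le> d"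
    and AEcd: "AE y in G. c \<le> y \<and> y \<le> d"
    and supp: "\<And>z e. c \<le> z \<Longrightarrow> z \<le> d \<Longrightarrow> e > 0 \<Longrightarrow> emeasure G (ball z e) > 0"
    and Lx: "\<And>n. L n \<le> ereal x" and Rx: "\<And>n. ereal x \<le> R n"
    and Lm: "\<And>n. L n \<le> L (Suc n)" and Rm: "\<And>n. R (Suc n) \<le> R n"
    and step: "\<And>n. n \<ge> 1 \<Longrightarrow> R (Suc n) = bG G (L n) (R n) \<or> L (Suc n) = bG G (L n) (R n)"
  shows "(\<lambda>n. chi d (R n) - clo c (L n)) \<longlonglongrightarrow> 0"
proof -
  define lo where "lo n = clo c (L n)" for n
  define hi where "hi n = chi d (R n)" for n
  define D where "D n = hi n - lo n" for n
  have lo_inc: "incseq lo" unfolding lo_def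
    by (intro incseq_SucI clo_mono[OF Lm Lx])
  have hi_dec: "decseq hi" unfolding hi_def
    by (intro decseq_SucI chi_mono[OF Rm Rx])
  have lo_x: "lo n \<le> x" for n unfolding lo_def using clo_props(3)[OF Lx cd(1)] .
  have hi_x: "x \<le> hi n" for n unfolding hi_def using chi_props(3)[OF Rx cd(2)] .
  have D_dec: "decseq D" unfolding D_def using lo_inc hi_dec
    by (simp add: decseq_def incseq_def diff_mono)
  have D_nn: "0 \<le> D n" for n unfolding D_def using lo_x[of n] hi_x[of n] by simp
  have bddD: "bdd_below (range D)" using D_nn by (intro bdd_belowI[of _ 0]) auto
  have DI: "D \<longlonglongrightarrow> (INF n. D n)" by (rule LIMSEQ_decseq_INF[OF bddD D_dec])
  show ?thesis
  proof (cases "(INF n. D n) = 0")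
    case True then show ?thesis using DI unfolding D_def lo_def hi_def by simp
  next
    case False
    define \<delta> where "\<delta> = (INF n. D n)"
    have \<delta>nn: "0 \<le> \<delta>" unfolding \<delta>_def using D_nn by (intro cINF_greatest) auto
    then have \<delta>pos: "\<delta> > 0" using False \<delta>_def by simp
    have D_ge: "\<delta> \<le> D n" for n unfolding \<delta>_def by (rule cINF_lower[OF bddD]) simp
    have bdd_lo: "bdd_above (range lo)" using lo_x by (intro bdd_aboveI[of _ x]) auto
    have bdd_hi: "bdd_below (range hi)" using hi_x by (intro bdd_belowI[of _ x]) auto
    define lam where "lam = (SUP n. lo n)"
    define \<rho> where "\<rho> = (INF n. hi n)"
    have lo_lim: "lo \<longlonglongrightarrow> lam" unfolding lam_def by (rule LIMSEQ_incseq_SUP[OF bdd_lo lo_inc])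
    have hi_lim: "hi \<longlonglongrightarrow> \<rho>" unfolding \<rho>_def by (rule LIMSEQ_decseq_INF[OF bdd_hi hi_dec])
    have lo_le: "lo n \<le> lam" for n unfolding lam_def by (rule cSUP_upper[OF _ bdd_lo]) simp
    have hi_ge: "\<rho> \<le> hi n" for n unfolding \<rho>_def by (rule cINF_lower[OF bdd_hi]) simp
    have "(\<lambda>n. hi n - lo n) \<longlonglongrightarrow> \<rho> - lam" by (intro tendsto_diff hi_lim lo_lim)
    then have gap: "\<delta> \<le> \<rho> - lam" using D_ge unfolding D_def
      by (intro LIMSEQ_le_const) auto
    have c_lam: "c \<le> lam" using lo_le[of 0] clo_props(1)[OF Lx cd(1)] unfolding lo_def by (meson order_trans)
    have rho_d: "\<rho> \<le> d" using hi_ge[of 0] chi_props(1)[OF Rx cd(2)] unfolding hi_def by (meson order_trans)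
    define z where "z = (lam + \<rho>) / 2"
    define r where "r = \<delta> / 4"
    have rpos: "r > 0" unfolding r_def using \<delta>pos by simp
    have z_cd: "c \<le> z" "z \<le> d" unfolding z_def using c_lam rho_d gap \<delta>pos by auto
    define w where "w = measure G (ball z r)"
    have wpos: "w > 0" unfolding w_def using supp[OF z_cd rpos] by (simp add: emeasure_eq_measure)
    have ball_abs: "y \<in> ball z r \<Longrightarrow> z - y < r \<and> y - z < r" for y
      by (simp add: dist_real_def abs_less_iff)
    have ball_lam: "lam + r < y" if "y \<in> ball z r" for y
      using conjunct1[OF ball_abs[OF that]] gap unfolding z_def r_def by (simp add: field_simps)
    have ball_rho: "y < \<rho> - r" if "y \<in> ball z r" for y
      using conjunct2[OF ball_abs[OF that]] gap unfolding z_def r_def by (simp add: field_simps)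
    define \<epsilon> where "\<epsilon> = r * w"
    have epos: "\<epsilon> > 0" unfolding \<epsilon>_def using rpos wpos by simp
    obtain N1 where N1: "\<And>n. n \<ge> N1 \<Longrightarrow> dist (lo n) lam < \<epsilon>"
      using lo_lim epos unfolding LIMSEQ_def by blast
    obtain N2 where N2: "\<And>n. n \<ge> N2 \<Longrightarrow> dist (hi n) \<rho> < \<epsilon>"
      using hi_lim epos unfolding LIMSEQ_def by blast
    define N where "N = max 1 (max N1 N2)"
    have N1': "lam - lo N < \<epsilon>" using N1[of N] lo_le[of N] unfolding N_def by (auto simp: dist_real_def)
    have N2': "hi N - \<rho> < \<epsilon>" using N2[of N] hi_ge[of N] unfolding N_def by (auto simp: dist_real_def)
    define C where "C = eIoc (L N) (R N)"
    have LN: "L N \<le> ereal (lo N)" unfolding lo_def by (rule clo_props(2)[OF Lx cd(1)])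
    have RN: "ereal (hi N) \<le> R N" unfolding hi_def by (rule chi_props(2)[OF Rx cd(2)])
    have ballC: "ball z r \<subseteq> C"
    proof
      fix y assume y: "y \<in> ball z r"
      have "lo N < y" using ball_lam[OF y] lo_le[of N] rpos by simp
      then have "L N < ereal y" by (intro le_less_trans[OF LN]) simp
      moreover have "y < hi N" using ball_rho[OF y] hi_ge[of N] rpos by simp
      then have "ereal y \<le> R N" by (intro order_trans[OF _ RN]) simp
      ultimately show "y \<in> C" unfolding C_def eIoc_def by simp
    qed
    have Cb: "C \<in> sets G" unfolding C_def by simp
    define P where "P = measure G C"
    define I where "I = (\<integral>y. indicator C y * y \<partial>G)"
    have Pw: "w \<le> P" unfolding w_def P_def using ballC Cb by (intro finite_measure_mono) auto
    have Ppos: "P > 0" using Pw wpos by simp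
    have i1: "integrable G (\<lambda>y. r * indicator (ball z r) y)"
      using integrable_mult_indicator[of "ball z r" G "\<lambda>_. r"] by (simp add: mult.commute)
    have int_ball: "(\<integral>y. r * indicator (ball z r) y - K \<partial>G) = r * w - K" for K
      using Bochner_Integration.integral_diff[OF i1 integrable_const[of K]] by (simp add: w_def prob_space space_G)
    have intg_ball: "integrable G (\<lambda>y. r * indicator (ball z r) y - K)" for K
      using i1 by simp
    have iC: "integrable G (\<lambda>y. indicator C y * y)" unfolding C_def by (rule integrable_ind)
    have iCc: "integrable G (\<lambda>y. indicator C y * K)" for K :: real unfolding C_def by (rule integrable_ind_const)
    have intC: "(\<integral>y. indicator C y * K \<partial>G) = K * P" for K :: real unfolding P_def C_def by (rule int_ind_const)
    have lowI: "r * w - (lam - lo N) \<le> I - lam * P"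
    proof -
      have "(\<integral>y. r * indicator (ball z r) y - (lam - lo N) \<partial>G) \<le> (\<integral>y. indicator C y * y - indicator C y * lam \<partial>G)"
      proof (rule integral_mono_AE)
        show "AE y in G. r * indicator (ball z r) y - (lam - lo N) \<le> indicator C y * y - indicator C y * lam"
          using AEcd
        proof (elim AE_mp, intro AE_I2 impI)
          fix y assume y: "c \<le> y \<and> y \<le> d"
          show "r * indicator (ball z r) y - (lam - lo N) \<le> indicator C y * y - indicator C y * lam"
          proof (cases "y \<in> ball z r")
            case True then show ?thesis using ballC ball_lam[OF True] lo_le[of N] by auto
          next
            case nb: False
            show ?thesis
            proof (cases "y \<in> C")
              case True
              then have "L N < ereal y" unfolding C_def eIoc_def by simp
              then have "lo N \<le> y" unfolding lo_def using clo_props(4)[OF Lx cd(1)] y by simp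
              then show ?thesis using True nb by simp
            next
              case False then show ?thesis using nb lo_le[of N] by simp
            qed
          qed
        qed
      qed (use iC iCc intg_ball in auto)
      also have "\<dots> = I - lam * P" unfolding I_def using iC iCc intC by (simp add: Bochner_Integration.integral_diff)
      finally show ?thesis using int_ball by simp
    qed
    have highI: "r * w - (hi N - \<rho>) \<le> \<rho> * P - I"
    proof -
      have "(\<integral>y. r * indicator (ball z r) y - (hi N - \<rho>) \<partial>G) \<le> (\<integral>y. indicator C y * \<rho> - indicator C y * y \<partial>G)"
      proof (rule integral_mono_AE)
        show "AE y in G. r * indicator (ball z r) y - (hi N - \<rho>) \<le> indicator C y * \<rho> - indicator C y * y"
          using AEcd
        proof (elim AE_mp, intro AE_I2 impI)
          fix y assume y: "c \<le> y \<and> y \<le> d"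
          show "r * indicator (ball z r) y - (hi N - \<rho>) \<le> indicator C y * \<rho> - indicator C y * y"
          proof (cases "y \<in> ball z r")
            case True then show ?thesis using ballC ball_rho[OF True] hi_ge[of N] by auto
          next
            case nb: False
            show ?thesis
            proof (cases "y \<in> C")
              case True
              then have "ereal y \<le> R N" unfolding C_def eIoc_def by simp
              then have "y \<le> hi N" unfolding hi_def using chi_props(4)[OF Rx cd(2)] y by simp
              then show ?thesis using True nb by simp
            next
              case False then show ?thesis using nb hi_ge[of N] by simp
            qed
          qed
        qed
      qed (use iC iCc intg_ball in auto)
      also have "\<dots> = \<rho> * P - I" unfolding I_def using iC iCc intC by (simp add: Bochner_Integration.integral_diff)
      finally show ?thesis using int_ball by simp
    qed
    have m1: "lam * P < I" using lowI N1' unfolding \<epsilon>_def by simp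
    have m2: "I < \<rho> * P" using highI N2' unfolding \<epsilon>_def by simp
    have LR: "L N \<le> R N" using Lx[of N] Rx[of N] by (meson order_trans)
    have mN: "bG G (L N) (R N) = ereal (I / P)"
      using bG_eq[OF LR] Ppos unfolding P_def I_def C_def by simp
    have q1: "lam < I / P" using m1 Ppos by (simp add: field_simps)
    have q2: "I / P < \<rho>" using m2 Ppos by (simp add: field_simps)
    have "N \<ge> 1" unfolding N_def by simp
    from step[OF this] show ?thesis
    proof
      assume "R (Suc N) = bG G (L N) (R N)"
      then have "hi (Suc N) \<le> I / P" unfolding hi_def mN by (rule ssubst) (rule chi_real)
      then show ?thesis using hi_ge[of "Suc N"] q2 by simp
    next
      assume "L (Suc N) = bG G (L N) (R N)"
      then have "I / P \<le> lo (Suc N)" unfolding lo_def mN by (rule ssubst) (rule clo_real)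
      then show ?thesis using lo_le[of "Suc N"] q1 by simp
    qed
  qed
qed


lemma AE_pos_cells: "AE x in G. \<forall>n l. 1 \<le> l \<longrightarrow> x \<in> cell n l \<longrightarrow> measure G (cell n l) > 0"
proof -
  have "AE x in G. 1 \<le> l \<longrightarrow> x \<in> cell n l \<longrightarrow> measure G (cell n l) > 0" for n l
  proof (cases "1 \<le> l \<and> measure G (cell n l) = 0")
    case True
    then have "cell n l \<in> null_sets G"
      by (auto simp: null_sets_def emeasure_eq_measure cell_borel)
    then show ?thesis by (rule AE_not_in[THEN AE_mp]) (intro AE_I2; auto)
  next
    case False
    have "0 \<le> measure G (cell n l)" by (rule measure_nonneg)
    then show ?thesis using False by (intro AE_I2) (auto simp: less_le)
  qed
  then show ?thesis by (simp add: AE_all_countable)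
qed

lemma supp_AE: assumes "support G = {c..d}" shows "AE y in G. c \<le> y \<and> y \<le> d"
proof -
  define F where "F = {ball y e | y e. e > 0 \<and> emeasure G (ball y e) = 0}"
  have "\<And>S. S \<in> F \<Longrightarrow> open S" unfolding F_def by auto
  then obtain F' where F': "F' \<subseteq> F" "countable F'" "\<Union>F' = \<Union>F" using Lindelof by metis
  have sub: "- {c..d} \<subseteq> \<Union>F"
  proof
    fix y assume "y \<in> - {c..d}"
    then have "y \<notin> support G" using assms by simp
    then obtain e where e: "e > 0" "\<not> emeasure G (ball y e) > 0" unfolding support_def by auto
    then have "emeasure G (ball y e) = 0" by (simp add: zero_less_iff_neq_zero)
    then have "ball y e \<in> F" unfolding F_def using e by blast
    moreover have "y \<in> ball y e" using e by simp
    ultimately show "y \<in> \<Union>F" by blast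
  qed
  have "(\<Union>X\<in>F'. X) \<in> null_sets G"
  proof (rule null_sets_UN'[OF F'(2)])
    fix X assume "X \<in> F'"
    then have "X \<in> F" using F' by auto
    then show "X \<in> null_sets G" unfolding F_def by (auto simp: null_sets_def)
  qed
  then have "\<Union>F' \<in> null_sets G" by simp
  then show ?thesis by (rule AE_I') (use sub F' in auto)
qed

lemma supp_T: assumes "support G = {c..d}" shows "{c..d} \<subseteq> T"
proof
  fix z assume z: "z \<in> {c..d}"
  show "z \<in> T"
  proof (rule ccontr)
    assume "z \<notin> T"
    then obtain e where e: "e > 0" "ball z e \<subseteq> - T"
      using T_closed by (metis open_Compl open_contains_ball_eq closed_def ComplI)
    have "emeasure G (ball z e) \<le> emeasure G (- T)"
      using e by (intro emeasure_mono) (auto simp: T_borel)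
    then have "emeasure G (ball z e) = 0" using nullT by simp
    moreover have "emeasure G (ball z e) > 0" using z assms e unfolding support_def by auto
    ultimately show False by simp
  qed
qed

lemma fn_bounds:
  assumes supp: "support G = {c..d}" and x: "c \<le> x" "x \<le> d" and n: "1 \<le> n"
    and pos: "measure G (cell n (path x n)) > 0"
  shows "clo c (Lp x n) \<le> fn n x \<and> fn n x \<le> chi d (Rp x n)"
proof -
  have xT: "x \<in> T" using supp_T[OF supp] x by auto
  have cT: "c \<in> T" using supp_T[OF supp] x by auto
  note inv = path_inv[OF xT, of n]
  have LR: "Lp x n \<le> Rp x n" using inv by (intro mu_mono) auto
  have Lx: "Lp x n \<le> ereal x" using inv by auto
  have Rx: "ereal x \<le> Rp x n" using inv by auto
  have fx: "fn n x = real_of_ereal (bG G (Lp x n) (Rp x n))"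
    using fn_path[OF xT] mp_bG[OF xT n] by simp
  have AEcd: "AE y in G. c \<le> y \<and> y \<le> d" by (rule supp_AE[OF supp])
  show ?thesis
  proof (cases "measure G (eIoc (Lp x n) (Rp x n)) > 0")
    case P: True
    let ?P = "measure G (eIoc (Lp x n) (Rp x n))"
    let ?I = "\<integral>y. indicator (eIoc (Lp x n) (Rp x n)) y * y \<partial>G"
    have f2: "fn n x = ?I / ?P" using fx bG_eq[OF LR] P by simp
    have "AE y in G. y \<in> eIoc (Lp x n) (Rp x n) \<longrightarrow> clo c (Lp x n) \<le> y"
      using AEcd
    proof (elim AE_mp, intro AE_I2 impI)
      fix y assume "c \<le> y \<and> y \<le> d" "y \<in> eIoc (Lp x n) (Rp x n)"
      then show "clo c (Lp x n) \<le> y" using clo_props(4)[OF Lx x(1)] by (auto simp: eIoc_def)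
    qed
    then have "clo c (Lp x n) * ?P \<le> ?I" by (rule mean_ge)
    have "AE y in G. y \<in> eIoc (Lp x n) (Rp x n) \<longrightarrow> y \<le> chi d (Rp x n)"
      using AEcd
    proof (elim AE_mp, intro AE_I2 impI)
      fix y assume "c \<le> y \<and> y \<le> d" "y \<in> eIoc (Lp x n) (Rp x n)"
      then show "y \<le> chi d (Rp x n)" using chi_props(4)[OF Rx x(2)] by (auto simp: eIoc_def)
    qed
    then have "?I \<le> chi d (Rp x n) * ?P" by (rule mean_le)
    then have B: "?I / ?P \<le> chi d (Rp x n)" using P by (simp add: pos_divide_le_eq)
    have A: "clo c (Lp x n) \<le> ?I / ?P" using \<open>clo c (Lp x n) * ?P \<le> ?I\<close> P by (simp add: pos_le_divide_eq)
    show ?thesis using A B f2 by simp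
  next
    case False
    moreover have "0 \<le> measure G (eIoc (Lp x n) (Rp x n))" by (rule measure_nonneg)
    ultimately have P0: "measure G (eIoc (Lp x n) (Rp x n)) = 0" by linarith
    have q1: "path x n = 1"
    proof (rule ccontr)
      assume "path x n \<noteq> 1"
      then have "cell n (path x n) = eIoc (Lp x n) (Rp x n)" using inv by (simp add: cell_eq eIoc_def)
      then show False using pos P0 by simp
    qed
    have Lc: "Lp x n = Ai" using q1 by simp
    have sub: "cell n (path x n) \<subseteq> eIoc (Lp x n) (Rp x n) \<union> {y. ereal y = Ai}"
      using cell_sub inv by auto
    have "measure G (cell n (path x n)) \<le> measure G (eIoc (Lp x n) (Rp x n) \<union> {y. ereal y = Ai})"
      using sub ereal_eq_set_borel by (intro finite_measure_mono) auto
    also have "\<dots> \<le> measure G (eIoc (Lp x n) (Rp x n)) + measure G {y. ereal y = Ai}"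
      using ereal_eq_set_borel by (intro measure_Un_le) auto
    finally have pA: "measure G {y. ereal y = Ai} > 0" using pos P0 by simp
    then obtain a where a: "Ai = ereal a" by (cases Ai) auto
    then have pa: "measure G {a} > 0" using pA by simp
    have "c \<le> a \<and> a \<le> d"
    proof (rule ccontr)
      assume na: "\<not> (c \<le> a \<and> a \<le> d)"
      have "AE y in G. y \<noteq> a" using AEcd by (rule AE_mp) (intro AE_I2; use na in auto)
      then have "{a} \<in> null_sets G" using AE_iff_null_sets[of "{a}" G] by simp
      then show False using pa by (simp add: emeasure_eq_measure null_sets_def)
    qed
    moreover have "Ai \<le> ereal c" using cT T_eq by auto
    ultimately have ac: "a = c" using a by simp
    have "fn n x = c" using fx bG_eq[OF LR] False Lc a ac by simp
    moreover have "clo c (Lp x n) = c" using Lc a ac by (simp add: clo_def)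
    moreover have "c \<le> chi d (Rp x n)" using chi_props(3)[OF Rx x(2)] x by simp
    ultimately show ?thesis by simp
  qed
qed

end


context sbaset
begin

lemma pointwise:
  assumes supp: "support G = {c..d}" and x: "c \<le> x" "x \<le> d"
    and pos: "\<And>n. 1 \<le> n \<Longrightarrow> measure G (cell n (path x n)) > 0"
  shows "(\<lambda>n. \<bar>fn (Suc n) x - x\<bar>) \<longlonglongrightarrow> 0" "\<And>n. 1 \<le> n \<Longrightarrow> \<bar>fn n x - x\<bar> \<le> d - c"
    "\<And>n. 1 \<le> n \<Longrightarrow> c \<le> fn n x \<and> fn n x \<le> d"
proof -
  have xT: "x \<in> T" using supp_T[OF supp] x by auto
  note inv = path_inv[OF xT]
  have Lx: "Lp x n \<le> ereal x" for n using inv[of n] by auto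
  have Rx: "ereal x \<le> Rp x n" for n using inv[of n] by auto
  have step: "Rp x (Suc n) = bG G (Lp x n) (Rp x n) \<or> Lp x (Suc n) = bG G (Lp x n) (Rp x n)"
    if "n \<ge> 1" for n
    using path_L_R[OF xT, of n] mp_bG[OF xT that] by auto
  have sh: "(\<lambda>n. chi d (Rp x n) - clo c (Lp x n)) \<longlonglongrightarrow> 0"
  proof -
    have sp: "\<And>z e. c \<le> z \<Longrightarrow> z \<le> d \<Longrightarrow> e > 0 \<Longrightarrow> emeasure G (ball z e) > 0"
      using supp by (auto simp: support_def)
    show ?thesis
      using shrink[where L="\<lambda>n. Lp x n" and R="\<lambda>n. Rp x n" and x=x and c=c and d=d,
          OF x supp_AE[OF supp] sp Lx Rx path_mono(1)[OF xT] path_mono(2)[OF xT] step] by simp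
  qed
  have b: "clo c (Lp x n) \<le> fn n x \<and> fn n x \<le> chi d (Rp x n)" if "1 \<le> n" for n
    by (rule fn_bounds[OF supp x that pos[OF that]])
  have cx: "clo c (Lp x n) \<le> x" "x \<le> chi d (Rp x n)" "c \<le> clo c (Lp x n)" "chi d (Rp x n) \<le> d" for n
    using clo_props[OF Lx x(1)] chi_props[OF Rx x(2)] by auto
  show "c \<le> fn n x \<and> fn n x \<le> d" if "1 \<le> n" for n using b[OF that] cx[of n] by linarith
  have le: "\<bar>fn n x - x\<bar> \<le> chi d (Rp x n) - clo c (Lp x n)" if "1 \<le> n" for n
    using b[OF that] cx[of n] by linarith
  show "\<bar>fn n x - x\<bar> \<le> d - c" if "1 \<le> n" for n using le[OF that] cx[of n] by linarith
  have sh': "(\<lambda>n. chi d (Rp x (Suc n)) - clo c (Lp x (Suc n))) \<longlonglongrightarrow> 0"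
    using sh by (rule LIMSEQ_Suc)
  show "(\<lambda>n. \<bar>fn (Suc n) x - x\<bar>) \<longlonglongrightarrow> 0"
  proof (rule tendsto_sandwich[OF _ _ tendsto_const sh'])
    show "\<forall>\<^sub>F n in sequentially. 0 \<le> \<bar>fn (Suc n) x - x\<bar>" by simp
    have "\<bar>fn (Suc n) x - x\<bar> \<le> chi d (Rp x (Suc n)) - clo c (Lp x (Suc n))" for n
      by (rule le) simp
    then show "\<forall>\<^sub>F n in sequentially. \<bar>fn (Suc n) x - x\<bar> \<le> chi d (Rp x (Suc n)) - clo c (Lp x (Suc n))"
      by (intro always_eventually allI)
  qed
qed


lemma id_G[measurable]: "(\<lambda>x. x) \<in> borel_measurable G"
  by (subst measurable_cong_sets[OF sets_G refl]) simp

lemma fn_dist_meas[measurable]: "(\<lambda>x. \<bar>fn m x - x\<bar> powr p) \<in> borel_measurable G"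
proof -
  have "(\<lambda>x. fn m x - x) \<in> borel_measurable G" using fn_G id_G by (rule borel_measurable_diff)
  then have "(\<lambda>x. \<bar>fn m x - x\<bar>) \<in> borel_measurable G" by (rule borel_measurable_abs)
  then show ?thesis by (intro powr_real_measurable) auto
qed

lemma idG: "distr G borel (\<lambda>x. x) = G"
  by (rule distr_id2) (simp add: sets_G)

lemma W_bounds:
  assumes p: "p > 0" and int: "integrable G (\<lambda>x. \<bar>fn m x - x\<bar> powr p)"
  shows "wasserstein p (sba_approx G T m) G \<le> (\<integral>x. \<bar>fn m x - x\<bar> powr p \<partial>G) powr (1/p)"
    "wasserstein p G (sba_approx G T m) \<le> (\<integral>x. \<bar>fn m x - x\<bar> powr p \<partial>G) powr (1/p)"
proof -
  have nn: "(\<integral>\<^sup>+x. ennreal (\<bar>fn m x - x\<bar> powr p) \<partial>G) = ennreal (\<integral>x. \<bar>fn m x - x\<bar> powr p \<partial>G)"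
    by (rule nn_integral_eq_integral[OF int]) simp
  have nn': "(\<integral>\<^sup>+x. ennreal (\<bar>x - fn m x\<bar> powr p) \<partial>G) = ennreal (\<integral>x. \<bar>fn m x - x\<bar> powr p \<partial>G)"
    using nn by (simp add: abs_minus_commute)
  have idb: "(\<lambda>x::real. x) \<in> borel_measurable borel" by simp
  have inn: "0 \<le> (\<integral>x. \<bar>fn m x - x\<bar> powr p \<partial>G)" by simp
  show "wasserstein p (sba_approx G T m) G \<le> (\<integral>x. \<bar>fn m x - x\<bar> powr p \<partial>G) powr (1/p)"
    using wass_bound[OF prob sets_G fn_borel[of m] idb p] nn' inn unfolding approx_eq idG by simp
  show "wasserstein p G (sba_approx G T m) \<le> (\<integral>x. \<bar>fn m x - x\<bar> powr p \<partial>G) powr (1/p)"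
    using wass_bound[OF prob sets_G idb fn_borel[of m] p] nn inn unfolding approx_eq idG by simp
qed


lemma conj2:
  assumes supp: "support G = {c..d}" and p: "1 \<le> p"
  shows "\<And>n. 1 \<le> n \<Longrightarrow> sba_approx G T n \<in> Pp p T"
    and "(\<lambda>n. wasserstein p (sba_approx G T n) G) \<longlonglongrightarrow> 0"
    and "(\<lambda>n. wasserstein p G (sba_approx G T n)) \<longlonglongrightarrow> 0"
proof -
  define good where "good x \<longleftrightarrow> c \<le> x \<and> x \<le> d \<and> x \<in> T \<and>
     (\<forall>n l. 1 \<le> l \<longrightarrow> x \<in> cell n l \<longrightarrow> measure G (cell n l) > 0)" for x
  have AEgood: "AE x in G. good x"
    using supp_AE[OF supp] AE_T AE_pos_cells unfolding good_def by eventually_elim auto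
  have gpos: "measure G (cell n (path x n)) > 0" if "good x" for x n
    using that path_cell[of x n] path_inv[of x n] unfolding good_def by auto
  have PW1: "(\<lambda>n. \<bar>fn (Suc n) x - x\<bar>) \<longlonglongrightarrow> 0" if "good x" for x
    using pointwise(1)[OF supp _ _ gpos] that unfolding good_def by auto
  have PW2: "\<bar>fn n x - x\<bar> \<le> d - c" if "good x" "1 \<le> n" for x n
    using pointwise(2)[OF supp _ _ gpos] that unfolding good_def by auto
  have PW3: "c \<le> fn n x \<and> fn n x \<le> d" if "good x" "1 \<le> n" for x n
    using pointwise(3)[OF supp _ _ gpos] that unfolding good_def by auto
  have p0: "p > 0" using p by simp
  define s where "s n x = \<bar>fn (Suc n) x - x\<bar> powr p" for n x
  have lim: "AE x in G. (\<lambda>n. s n x) \<longlonglongrightarrow> 0"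
    using AEgood
  proof (elim AE_mp, intro AE_I2 impI)
    fix x assume "good x"
    then show "(\<lambda>n. s n x) \<longlonglongrightarrow> 0" unfolding s_def
      by (intro tendsto_zero_powrI[OF PW1 tendsto_const _ p0]) auto
  qed
  have bnd: "AE x in G. norm (s n x) \<le> (d - c) powr p" for n
    using AEgood
  proof (elim AE_mp, intro AE_I2 impI)
    fix x assume "good x"
    then show "norm (s n x) \<le> (d - c) powr p" unfolding s_def
      using PW2[of x "Suc n"] p0 by (simp add: powr_mono2)
  qed
  have sm: "s n \<in> borel_measurable G" for n unfolding s_def by (rule fn_dist_meas)
  have DCT: "(\<lambda>n. integral\<^sup>L G (s n)) \<longlonglongrightarrow> integral\<^sup>L G (\<lambda>x. 0)"
    by (rule integral_dominated_convergence[where w="\<lambda>_. (d - c) powr p", OF _ sm _ lim bnd]) auto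
  have sint: "integrable G (s n)" for n
    by (rule integrable_dominated_convergence2[where w="\<lambda>_. (d - c) powr p", OF _ sm _ lim bnd]) auto
  have DCT': "(\<lambda>n. (integral\<^sup>L G (s n)) powr (1/p)) \<longlonglongrightarrow> 0"
    using DCT p0 by (intro tendsto_zero_powrI[OF _ tendsto_const]) (auto simp: s_def)
  have Wb1: "wasserstein p (sba_approx G T (Suc n)) G \<le> (integral\<^sup>L G (s n)) powr (1/p)" for n
    using W_bounds(1)[OF p0 sint[of n, unfolded s_def]] unfolding s_def .
  have Wb2: "wasserstein p G (sba_approx G T (Suc n)) \<le> (integral\<^sup>L G (s n)) powr (1/p)" for n
    using W_bounds(2)[OF p0 sint[of n, unfolded s_def]] unfolding s_def .
  have "(\<lambda>n. wasserstein p (sba_approx G T (Suc n)) G) \<longlonglongrightarrow> 0"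
    by (rule tendsto_sandwich[OF _ _ tendsto_const DCT'])
       (use Wb1 in \<open>auto simp: wasserstein_def intro!: always_eventually\<close>)
  then show "(\<lambda>n. wasserstein p (sba_approx G T n) G) \<longlonglongrightarrow> 0"
    by (rule filterlim_sequentially_Suc[THEN iffD1])
  have "(\<lambda>n. wasserstein p G (sba_approx G T (Suc n))) \<longlonglongrightarrow> 0"
    by (rule tendsto_sandwich[OF _ _ tendsto_const DCT'])
       (use Wb2 in \<open>auto simp: wasserstein_def intro!: always_eventually\<close>)
  then show "(\<lambda>n. wasserstein p G (sba_approx G T n)) \<longlonglongrightarrow> 0"
    by (rule filterlim_sequentially_Suc[THEN iffD1])
  fix n :: nat assume n: "1 \<le> n"
  have fT: "AE x in G. fn n x \<in> T"
    using AEgood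
  proof (elim AE_mp, intro AE_I2 impI)
    fix x assume "good x"
    then show "fn n x \<in> T" using PW3[OF _ n] supp_T[OF supp] by auto
  qed
  have fB: "AE x in G. norm (\<bar>fn n x\<bar> powr p) \<le> (max \<bar>c\<bar> \<bar>d\<bar>) powr p"
    using AEgood
  proof (elim AE_mp, intro AE_I2 impI)
    fix x assume "good x"
    then have "c \<le> fn n x \<and> fn n x \<le> d" using PW3[OF _ n] by blast
    then have "\<bar>fn n x\<bar> \<le> max \<bar>c\<bar> \<bar>d\<bar>" by (auto simp: abs_le_iff le_max_iff_disj)
    then show "norm (\<bar>fn n x\<bar> powr p) \<le> (max \<bar>c\<bar> \<bar>d\<bar>) powr p" using p0 by (simp add: powr_mono2)
  qed
  show "sba_approx G T n \<in> Pp p T"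
    unfolding approx_eq Pp_def
  proof (intro CollectI conjI)
    show "sets (distr G borel (fn n)) = sets borel" by simp
    show "prob_space (distr G borel (fn n))" by (rule prob_space_distr) simp
    have pre: "fn n -` (- T) \<in> sets borel" using measurable_sets[OF fn_borel[of n], of "-T"] by simp
    have "fn n -` (- T) \<in> null_sets G"
      using fT AE_iff_null_sets[of "fn n -` (- T)" G] pre by simp
    then show "emeasure (distr G borel (fn n)) (- T) = 0"
      using emeasure_distr[OF fn_G, of "-T"] by (simp add: space_G null_sets_def)
    have "integrable G (\<lambda>x. \<bar>fn n x\<bar> powr p)"
      by (rule integrable_const_bound[OF fB]) measurable
    then show "integrable (distr G borel (fn n)) (\<lambda>x. \<bar>x\<bar> powr p)"
      by (subst integrable_distr_eq[OF fn_G]) auto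
  qed
qed

end


context sbaset
begin

lemma atoms_fix:
  assumes finS: "finite S" and AES: "AE x in G. x \<in> S" and SA: "\<And>s. s \<in> S \<Longrightarrow> Ai < ereal s"
  shows "\<exists>n\<ge>1. AE x in G. fn n x = x"
proof -
  define S' where "S' = {s\<in>S. measure G {s} > 0}"
  have finS': "finite S'" using finS unfolding S'_def by simp
  have AES': "AE x in G. x \<in> S'"
  proof -
    have "AE x in G. x \<notin> {s\<in>S. measure G {s} = 0}"
    proof (rule AE_not_in)
      have "(\<Union>s\<in>{s\<in>S. measure G {s} = 0}. {s}) \<in> null_sets G"
        using finS by (intro null_sets.finite_UN) (auto simp: null_sets_def emeasure_eq_measure)
      then show "{s\<in>S. measure G {s} = 0} \<in> null_sets G" by simp
    qed
    then show ?thesis using AES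
    proof (eventually_elim)
      case (elim x)
      have "0 \<le> measure G {x}" by simp
      then show ?case using elim unfolding S'_def by (auto simp: less_le)
    qed
  qed
  have S'T: "s \<in> T" if "s \<in> S'" for s
  proof (rule ccontr)
    assume "s \<notin> T"
    then have "{s} \<subseteq> -T" by auto
    then have "emeasure G {s} \<le> emeasure G (-T)" by (intro emeasure_mono) (auto simp: T_borel)
    then have "measure G {s} \<le> 0" using nullT by (simp add: emeasure_eq_measure)
    then have "measure G {s} = 0" using measure_nonneg[of G "{s}"] by linarith
    then show False using that unfolding S'_def by simp
  qed
  have S'A: "Ai < ereal s" if "s \<in> S'" for s using that SA unfolding S'_def by simp
  define C where "C n s = eIoc (Lp s n) (Rp s n)" for n s
  define N where "N n s = card (S' \<inter> C n s)" for n s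
  have sC: "s \<in> C n s" if "s \<in> S'" for n s
    using path_inv[OF S'T[OF that], of n] S'A[OF that] unfolding C_def eIoc_def by auto
  have Csub: "C (Suc n) s \<subseteq> C n s" if "s \<in> S'" for n s
    using path_mono[OF S'T[OF that], of n] unfolding C_def eIoc_def by (auto intro: order_trans le_less_trans)
  have Nge1: "1 \<le> N n s" if "s \<in> S'" for n s
    unfolding N_def using sC[OF that, of n] that finS'
    by (metis IntI One_nat_def Suc_leI card_gt_0_iff empty_iff finite_Int)
  have Nmono: "N (Suc n) s \<le> N n s" if "s \<in> S'" for n s
    unfolding N_def using Csub[OF that, of n] finS' by (intro card_mono) auto
  have PC: "measure G (C n s) > 0" if "s \<in> S'" for n s
  proof -
    have "measure G {s} \<le> measure G (C n s)"
      using sC[OF that, of n] unfolding C_def by (intro finite_measure_mono) auto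
    then show ?thesis using that unfolding S'_def by simp
  qed
  have LRle: "Lp s n \<le> Rp s n" if "s \<in> S'" for n s
    using path_inv[OF S'T[OF that], of n] by (intro mu_mono) auto
  have mpI: "mp s n = ereal ((\<integral>y. indicator (C n s) y * y \<partial>G) / measure G (C n s))"
    if "s \<in> S'" "1 \<le> n" for n s
    using mp_bG[OF S'T[OF that(1)] that(2)] bG_eq[OF LRle[OF that(1)]] PC[OF that(1)]
    unfolding C_def by simp
  have AEC: "AE y in G. y \<in> C n s \<longrightarrow> y \<in> S' \<inter> C n s" for n s
    using AES' by (rule AE_mp) (intro AE_I2; auto)
  have Ndec: "N (Suc n) s < N n s" if s: "s \<in> S'" and n: "1 \<le> n" and N2: "2 \<le> N n s" for n s
  proof -
    define A where "A = S' \<inter> C n s"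
    have finA: "finite A" unfolding A_def using finS' by simp
    have cA: "2 \<le> card A" using N2 unfolding N_def A_def .
    then have Ane: "A \<noteq> {}" by auto
    define a1 where "a1 = Min A"
    define a2 where "a2 = Max A"
    have a1A: "a1 \<in> A" and a2A: "a2 \<in> A" unfolding a1_def a2_def using finA Ane by auto
    have a12: "a1 \<le> y \<and> y \<le> a2" if "y \<in> A" for y unfolding a1_def a2_def using finA that by auto
    have a1a2: "a1 < a2"
    proof (rule ccontr)
      assume "\<not> a1 < a2"
      then have "a1 = a2" using a12[OF a1A] by simp
      then have "A \<subseteq> {a1}" using a12 by force
      then have "card A \<le> 1" using card_mono[of "{a1}" A] by simp
      then show False using cA by simp
    qed
    let ?P = "measure G (C n s)" and ?I = "\<integral>y. indicator (C n s) y * y \<partial>G"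
    have P: "?P > 0" by (rule PC[OF s])
    have m: "mp s n = ereal (?I / ?P)" by (rule mpI[OF s n])
    have "AE y in G. y \<in> eIoc (Lp s n) (Rp s n) \<longrightarrow> a1 \<le> y"
      using AEC[of n s]
    proof (elim AE_mp, intro AE_I2 impI)
      fix y assume "y \<in> C n s \<longrightarrow> y \<in> S' \<inter> C n s" "y \<in> eIoc (Lp s n) (Rp s n)"
      then show "a1 \<le> y" using a12[of y] unfolding A_def C_def by auto
    qed
    then have lo: "a1 * ?P \<le> ?I" unfolding C_def by (rule mean_ge)
    have a1pos: "measure G {a1} > 0" using a1A unfolding A_def S'_def by simp
    have a1C: "a1 \<in> C n s" using a1A unfolding A_def by simp
    have hi: "?I < a2 * ?P"
    proof -
      have i1: "integrable G (\<lambda>y. indicator (C n s) y * y)" unfolding C_def by (rule integrable_ind)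
      have i2: "integrable G (\<lambda>y. indicator (C n s) y * a2 - (a2 - a1) * indicator {a1} y)"
      proof -
        have "integrable G (\<lambda>y. indicator (C n s) y * a2)" unfolding C_def by (rule integrable_ind_const)
        moreover have "integrable G (\<lambda>y. (a2 - a1) * indicator {a1} y)"
          using integrable_mult_indicator[of "{a1}" G "\<lambda>_. a2 - a1"] by (simp add: mult.commute)
        ultimately show ?thesis by simp
      qed
      have "?I \<le> (\<integral>y. indicator (C n s) y * a2 - (a2 - a1) * indicator {a1} y \<partial>G)"
      proof (rule integral_mono_AE[OF i1 i2])
        show "AE y in G. indicator (C n s) y * y \<le> indicator (C n s) y * a2 - (a2 - a1) * indicator {a1} y"
          using AEC[of n s]
        proof (elim AE_mp, intro AE_I2 impI)
          fix y assume "y \<in> C n s \<longrightarrow> y \<in> S' \<inter> C n s"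
          then show "indicator (C n s) y * y \<le> indicator (C n s) y * a2 - (a2 - a1) * indicator {a1} y"
            using a12[of y] a1C unfolding A_def by (cases "y \<in> C n s"; cases "y = a1") auto
        qed
      qed
      also have "\<dots> = a2 * ?P - (a2 - a1) * measure G {a1}"
      proof -
        have "integrable G (\<lambda>y. indicator (C n s) y * a2)" unfolding C_def by (rule integrable_ind_const)
        moreover have "integrable G (\<lambda>y. (a2 - a1) * indicator {a1} y)"
          using integrable_mult_indicator[of "{a1}" G "\<lambda>_. a2 - a1"] by (simp add: mult.commute)
        ultimately show ?thesis
          by (simp add: Bochner_Integration.integral_diff space_G int_ind_const[unfolded C_def] C_def)
      qed
      also have "\<dots> < a2 * ?P" using a1a2 a1pos by simp
      finally show ?thesis .
    qed
    have q1: "a1 \<le> ?I / ?P" using lo P by (simp add: pos_le_divide_eq)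
    have q2: "?I / ?P < a2" using hi P by (simp add: pos_divide_less_eq)
    have sub: "S' \<inter> C (Suc n) s \<subseteq> A - {a1} \<or> S' \<inter> C (Suc n) s \<subseteq> A - {a2}"
    proof (cases "ereal s \<le> mp s n")
      case True
      then have "Rp s (Suc n) = mp s n" "Lp s (Suc n) = Lp s n" using path_L_R[OF S'T[OF s], of n] by auto
      then have "C (Suc n) s = eIoc (Lp s n) (ereal (?I / ?P))" unfolding C_def m by simp
      then have "a2 \<notin> C (Suc n) s" using q2 unfolding eIoc_def by auto
      then show ?thesis using Csub[OF s, of n] unfolding A_def by auto
    next
      case False
      then have "Lp s (Suc n) = mp s n" "Rp s (Suc n) = Rp s n" using path_L_R[OF S'T[OF s], of n] by auto
      then have "C (Suc n) s = eIoc (ereal (?I / ?P)) (Rp s n)" unfolding C_def m by simp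
      then have "a1 \<notin> C (Suc n) s" using q1 unfolding eIoc_def by auto
      then show ?thesis using Csub[OF s, of n] unfolding A_def by auto
    qed
    have "card (A - {a1}) < card A" "card (A - {a2}) < card A"
      using finA a1A a2A cA by auto
    moreover have "card (S' \<inter> C (Suc n) s) \<le> card (A - {a1})" if "S' \<inter> C (Suc n) s \<subseteq> A - {a1}"
      using that finA by (intro card_mono) auto
    moreover have "card (S' \<inter> C (Suc n) s) \<le> card (A - {a2})" if "S' \<inter> C (Suc n) s \<subseteq> A - {a2}"
      using that finA by (intro card_mono) auto
    ultimately show ?thesis using sub unfolding N_def A_def by fastforce
  qed
  have N1: "N 1 s \<le> card S'" if "s \<in> S'" for s unfolding N_def using finS' by (intro card_mono) auto
  have Nbound: "N (Suc j) s \<le> max 1 (card S' - j)" if s: "s \<in> S'" for j s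
  proof (induction j)
    case 0 then show ?case using N1[OF s] by simp
  next
    case (Suc j)
    show ?case
    proof (cases "2 \<le> N (Suc j) s")
      case True
      then have "N (Suc (Suc j)) s < N (Suc j) s" by (intro Ndec[OF s]) auto
      then show ?thesis using Suc.IH True by auto
    next
      case False
      then show ?thesis using Nmono[OF s, of "Suc j"] by auto
    qed
  qed
  define n0 where "n0 = Suc (card S')"
  have single: "S' \<inter> C n0 s = {s}" if s: "s \<in> S'" for s
  proof -
    have "N n0 s \<le> 1" using Nbound[OF s, of "card S'"] unfolding n0_def by simp
    then have "card (S' \<inter> C n0 s) \<le> 1" unfolding N_def .
    moreover have "s \<in> S' \<inter> C n0 s" using s sC by auto
    moreover have "finite (S' \<inter> C n0 s)" using finS' by simp
    ultimately show ?thesis by (metis card_le_Suc0_iff_eq insert_absorb singletonD subsetI subset_antisym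
          empty_subsetI insert_subset One_nat_def)
  qed
  have fix1: "fn n0 s = s" if s: "s \<in> S'" for s
  proof -
    have n: "1 \<le> n0" unfolding n0_def by simp
    let ?P = "measure G (C n0 s)" and ?I = "\<integral>y. indicator (C n0 s) y * y \<partial>G"
    have P: "?P > 0" by (rule PC[OF s])
    have AEs: "AE y in G. y \<in> eIoc (Lp s n0) (Rp s n0) \<longrightarrow> y = s"
      using AEC[of n0 s]
    proof (elim AE_mp, intro AE_I2 impI)
      fix y assume "y \<in> C n0 s \<longrightarrow> y \<in> S' \<inter> C n0 s" "y \<in> eIoc (Lp s n0) (Rp s n0)"
      then show "y = s" using single[OF s] unfolding C_def by auto
    qed
    have a: "AE y in G. y \<in> eIoc (Lp s n0) (Rp s n0) \<longrightarrow> s \<le> y" using AEs by (rule AE_mp) (intro AE_I2; auto)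
    have b: "AE y in G. y \<in> eIoc (Lp s n0) (Rp s n0) \<longrightarrow> y \<le> s" using AEs by (rule AE_mp) (intro AE_I2; auto)
    have "s * ?P \<le> ?I" unfolding C_def using a by (rule mean_ge)
    moreover have "?I \<le> s * ?P" unfolding C_def using b by (rule mean_le)
    ultimately have "?I = s * ?P" by simp
    then have "?I / ?P = s" using P by simp
    then show ?thesis using fn_path[OF S'T[OF s]] mpI[OF s n] by simp
  qed
  have "AE x in G. fn n0 x = x" using AES' by (rule AE_mp) (intro AE_I2; use fix1 in auto)
  then show ?thesis by (intro exI[of _ n0]) (auto simp: n0_def)
qed

end


definition trunc :: "real \<Rightarrow> real \<Rightarrow> real" where "trunc K x = max (-K) (min K x)"
definition qz :: "real \<Rightarrow> real \<Rightarrow> real" where "qz K x = real_of_int \<lfloor>K * trunc K x\<rfloor> / K"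

lemma trunc_close: "0 \<le> K \<Longrightarrow> \<bar>trunc K x - x\<bar> \<le> \<bar>x\<bar>" unfolding trunc_def by auto
lemma trunc_id: "\<bar>x\<bar> \<le> K \<Longrightarrow> trunc K x = x" unfolding trunc_def by auto
lemma trunc_bd: "0 \<le> K \<Longrightarrow> \<bar>trunc K x\<bar> \<le> K" unfolding trunc_def by auto

lemma qz_close: assumes "K > 0" shows "\<bar>qz K x - trunc K x\<bar> \<le> 1 / K"
proof -
  define t where "t = K * trunc K x"
  have f: "real_of_int \<lfloor>t\<rfloor> \<le> t" "t < real_of_int \<lfloor>t\<rfloor> + 1" by linarith+
  have "qz K x - trunc K x = (real_of_int \<lfloor>t\<rfloor> - t) / K" unfolding qz_def t_def using assms
    by (simp add: field_simps)
  then have "\<bar>qz K x - trunc K x\<bar> = (t - real_of_int \<lfloor>t\<rfloor>) / K" using f assms by (simp add: abs_div)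
  also have "\<dots> \<le> 1 / K" using f assms by (intro divide_right_mono) linarith+
  finally show ?thesis .
qed

lemma qz_range: assumes "K > 0" shows "finite (range (qz K))"
proof -
  define M where "M = \<lceil>K * K\<rceil> + 1"
  have "range (qz K) \<subseteq> (\<lambda>i. real_of_int i / K) ` {-M..M}"
  proof
    fix y assume "y \<in> range (qz K)"
    then obtain x where y: "y = qz K x" by auto
    define t where "t = K * trunc K x"
    have "\<bar>t\<bar> \<le> K * K" unfolding t_def using trunc_bd[of K x] assms by (simp add: abs_mult)
    then have "-M \<le> \<lfloor>t\<rfloor> \<and> \<lfloor>t\<rfloor> \<le> M" unfolding M_def by (auto simp: abs_le_iff) linarith+
    then show "y \<in> (\<lambda>i. real_of_int i / K) ` {-M..M}" unfolding y qz_def t_def[symmetric] by auto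
  qed
  then show ?thesis by (rule finite_subset) simp
qed

lemma qz_meas[measurable]: "qz K \<in> borel_measurable borel"
  unfolding qz_def trunc_def by measurable

lemma sum_powr_le: fixes a b p :: real assumes "0 \<le> a" "0 \<le> b" "0 < p"
  shows "(a + b) powr p \<le> 2 powr p * (a powr p + b powr p)"
proof -
  have "(a + b) powr p \<le> (2 * max a b) powr p" using assms by (intro powr_mono2) auto
  also have "\<dots> = 2 powr p * (max a b) powr p" using assms by (simp add: powr_mult)
  also have "(max a b) powr p \<le> a powr p + b powr p" by (cases "a \<le> b") (auto simp: max_def)
  then have "2 powr p * (max a b) powr p \<le> 2 powr p * (a powr p + b powr p)" by simp
  finally show ?thesis .
qed

context sbaset
begin

definition zT where "zT = (SOME z. z \<in> T \<and> Ai < ereal z \<and> ereal z < Bs)"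

lemma zT: "zT \<in> T" "Ai < ereal zT"
proof -
  have "\<exists>z. z \<in> T \<and> Ai < ereal z \<and> ereal z < Bs" using adm_props(5)[OF adm] by blast
  from someI_ex[OF this] show "zT \<in> T" "Ai < ereal zT" unfolding zT_def by auto
qed

definition hq :: "nat \<Rightarrow> real \<Rightarrow> real" where
  "hq k x = (1 - 1 / real (Suc k)) * closest_point T (qz (real (Suc k)) x) + zT / real (Suc k)"

lemma T_ne: "T \<noteq> {}" using zT by auto

lemma cp_T: "closest_point T y \<in> T" using closest_point_in_set[OF T_closed T_ne] .

lemma hq_T: "hq k x \<in> T"
proof -
  let ?K = "real (Suc k)"
  have "(1 - 1 / ?K) *\<^sub>R closest_point T (qz ?K x) + (1 / ?K) *\<^sub>R zT \<in> T"
    by (rule convexD[OF T_convex cp_T zT(1)]) auto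
  then show ?thesis unfolding hq_def by simp
qed

lemma hq_A: "Ai < ereal (hq k x)"
proof (cases Ai)
  case (real a)
  let ?K = "real (Suc k)"
  have "a \<le> closest_point T (qz ?K x)" using cp_T T_eq real by auto
  moreover have "a < zT" using zT(2) real by simp
  moreover have "0 \<le> 1 - 1 / ?K" by simp
  ultimately have "(1 - 1 / ?K) * a \<le> (1 - 1 / ?K) * closest_point T (qz ?K x)"
    "a / ?K < zT / ?K" by (auto intro: mult_left_mono divide_strict_right_mono)
  moreover have "a = (1 - 1 / ?K) * a + a / ?K" by (simp add: left_diff_distrib)
  ultimately have "a < hq k x" unfolding hq_def by linarith
  then show ?thesis using real by simp
qed (use Ai_Bs in auto)

lemma hq_range: "finite (range (hq k))"
proof -
  have "range (hq k) \<subseteq> (\<lambda>y. (1 - 1 / real (Suc k)) * closest_point T y + zT / real (Suc k)) ` range (qz (real (Suc k)))"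
    unfolding hq_def by auto
  then show ?thesis by (rule finite_subset) (intro finite_imageI qz_range; simp)
qed

lemma hq_meas[measurable]: "hq k \<in> borel_measurable borel"
proof -
  have "continuous_on UNIV (closest_point T)" by (rule continuous_on_closest_point[OF T_convex T_closed T_ne])
  then have "closest_point T \<in> borel_measurable borel" by (rule borel_measurable_continuous_onI)
  then show ?thesis unfolding hq_def by measurable
qed

lemma hq_close: assumes "x \<in> T"
  shows "\<bar>hq k x - x\<bar> \<le> \<bar>qz (real (Suc k)) x - x\<bar> + (\<bar>zT\<bar> + \<bar>x\<bar>) / real (Suc k)"
proof -
  let ?K = "real (Suc k)" and ?r = "closest_point T (qz (real (Suc k)) x)"
  have r: "\<bar>?r - x\<bar> \<le> \<bar>qz ?K x - x\<bar>"
    using closest_point_lipschitz[OF T_convex T_closed T_ne, of "qz ?K x" x] closest_point_self[OF assms]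
    by (simp add: dist_real_def)
  have gen: "(1 - 1 / K) * r + zT / K - x = (1 - 1 / K) * (r - x) + (zT - x) / K" if "K \<noteq> 0" for K r :: real
    using that by (simp add: field_simps)
  have "hq k x - x = (1 - 1 / ?K) * (?r - x) + (zT - x) / ?K" unfolding hq_def by (rule gen) simp
  then have "\<bar>hq k x - x\<bar> \<le> \<bar>(1 - 1 / ?K) * (?r - x)\<bar> + \<bar>(zT - x) / ?K\<bar>"
    by (metis abs_triangle_ineq)
  also have "\<bar>(1 - 1 / ?K) * (?r - x)\<bar> \<le> \<bar>?r - x\<bar>"
  proof -
    have "0 \<le> 1 - 1 / ?K" "1 - 1 / ?K \<le> 1" by auto
    then show ?thesis by (simp add: abs_mult mult_left_le_one_le)
  qed
  also have "\<bar>(zT - x) / ?K\<bar> \<le> (\<bar>zT\<bar> + \<bar>x\<bar>) / ?K" by (simp add: abs_div divide_right_mono)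
  finally show ?thesis using r by simp
qed


lemma hq_pw: assumes "x \<in> T" shows "(\<lambda>k. \<bar>hq k x - x\<bar>) \<longlonglongrightarrow> 0"
proof -
  define C where "C = 1 + \<bar>zT\<bar> + \<bar>x\<bar>"
  have ev: "\<forall>\<^sub>F k in sequentially. \<bar>hq k x - x\<bar> \<le> C / real (Suc k)"
  proof (rule eventually_sequentiallyI[of "nat \<lceil>\<bar>x\<bar>\<rceil>"])
    fix k assume k: "nat \<lceil>\<bar>x\<bar>\<rceil> \<le> k"
    let ?K = "real (Suc k)"
    have "\<bar>x\<bar> \<le> ?K" using k by linarith
    then have tr: "trunc ?K x = x" by (rule trunc_id)
    have "\<bar>qz ?K x - x\<bar> \<le> 1 / ?K" using qz_close[of ?K x] tr by simp
    then have "\<bar>hq k x - x\<bar> \<le> 1 / ?K + (\<bar>zT\<bar> + \<bar>x\<bar>) / ?K" using hq_close[OF assms, of k] by linarith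
    also have "\<dots> = C / ?K" unfolding C_def by (simp add: add_divide_distrib)
    finally show "\<bar>hq k x - x\<bar> \<le> C / ?K" .
  qed
  have "(\<lambda>k. C / real k) \<longlonglongrightarrow> 0" by (rule lim_const_over_n)
  then have lim: "(\<lambda>k. C / real (Suc k)) \<longlonglongrightarrow> 0" by (rule LIMSEQ_Suc)
  show ?thesis by (rule tendsto_sandwich[OF _ ev tendsto_const lim]) simp
qed

lemma hq_bound: assumes "x \<in> T" shows "\<bar>hq k x - x\<bar> \<le> 2 * \<bar>x\<bar> + (1 + \<bar>zT\<bar>)"
proof -
  let ?K = "real (Suc k)"
  have K1: "1 \<le> ?K" by simp
  have "\<bar>qz ?K x - x\<bar> \<le> \<bar>qz ?K x - trunc ?K x\<bar> + \<bar>trunc ?K x - x\<bar>" by linarith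
  also have "\<dots> \<le> 1 / ?K + \<bar>x\<bar>" using qz_close[of ?K x] trunc_close[of ?K x] by simp
  also have "1 / ?K \<le> 1" using K1 by simp
  finally have a: "\<bar>qz ?K x - x\<bar> \<le> 1 + \<bar>x\<bar>" by simp
  have b: "(\<bar>zT\<bar> + \<bar>x\<bar>) / ?K \<le> \<bar>zT\<bar> + \<bar>x\<bar>" using divide_left_mono[of 1 ?K "\<bar>zT\<bar> + \<bar>x\<bar>"] K1 by simp
  show ?thesis using hq_close[OF assms, of k] a b by linarith
qed

lemma hq_lim:
  assumes p: "0 < p" and ip: "integrable G (\<lambda>x. \<bar>x\<bar> powr p)"
  shows "(\<lambda>k. \<integral>x. \<bar>hq k x - x\<bar> powr p \<partial>G) \<longlonglongrightarrow> 0"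
    and "\<And>k. integrable G (\<lambda>x. \<bar>hq k x - x\<bar> powr p)"
proof -
  define C where "C = 1 + \<bar>zT\<bar>"
  define w where "w x = 2 powr p * (2 powr p * \<bar>x\<bar> powr p + C powr p)" for x
  have wi: "integrable G w" unfolding w_def using ip by simp
  have hqG: "hq k \<in> borel_measurable G" for k by (subst measurable_cong_sets[OF sets_G refl]) simp
  have idG: "(\<lambda>x::real. x) \<in> borel_measurable G" by (subst measurable_cong_sets[OF sets_G refl]) simp
  have sm: "(\<lambda>x. \<bar>hq k x - x\<bar> powr p) \<in> borel_measurable G" for k
  proof -
    have "(\<lambda>x. hq k x - x) \<in> borel_measurable G" using hqG idG by (rule borel_measurable_diff)
    then have "(\<lambda>x. \<bar>hq k x - x\<bar>) \<in> borel_measurable G" by (rule borel_measurable_abs)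
    then show ?thesis by (intro powr_real_measurable) auto
  qed
  have lim: "AE x in G. (\<lambda>k. \<bar>hq k x - x\<bar> powr p) \<longlonglongrightarrow> 0"
    using AE_T
  proof (elim AE_mp, intro AE_I2 impI)
    fix x assume "x \<in> T"
    then show "(\<lambda>k. \<bar>hq k x - x\<bar> powr p) \<longlonglongrightarrow> 0"
      by (intro tendsto_zero_powrI[OF hq_pw tendsto_const _ p]) auto
  qed
  have bnd: "AE x in G. norm (\<bar>hq k x - x\<bar> powr p) \<le> w x" for k
    using AE_T
  proof (elim AE_mp, intro AE_I2 impI)
    fix x assume x: "x \<in> T"
    have "\<bar>hq k x - x\<bar> powr p \<le> (2 * \<bar>x\<bar> + C) powr p"
      using hq_bound[OF x, of k] p unfolding C_def by (intro powr_mono2) auto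
    also have "\<dots> \<le> 2 powr p * ((2 * \<bar>x\<bar>) powr p + C powr p)"
      using p unfolding C_def by (intro sum_powr_le) auto
    also have "(2 * \<bar>x\<bar>) powr p = 2 powr p * \<bar>x\<bar> powr p" by (simp add: powr_mult)
    finally show "norm (\<bar>hq k x - x\<bar> powr p) \<le> w x" unfolding w_def by simp
  qed
  show "(\<lambda>k. \<integral>x. \<bar>hq k x - x\<bar> powr p \<partial>G) \<longlonglongrightarrow> 0"
    using integral_dominated_convergence[OF _ sm wi lim bnd] by simp
  show "integrable G (\<lambda>x. \<bar>hq k x - x\<bar> powr p)" for k
    using integrable_dominated_convergence2[OF _ sm wi lim bnd] by simp
qed

end


lemma Pp_sbaset:
  assumes adm: "admissible_Theta T" and p: "1 \<le> p" and G: "G \<in> Pp p T"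
  shows "sbaset G T"
proof -
  have sG: "sets G = sets borel" and pG: "prob_space G" and nG: "emeasure G (-T) = 0"
    and iG: "integrable G (\<lambda>x. \<bar>x\<bar> powr p)" using G unfolding Pp_def by auto
  interpret prob_space G by (rule pG)
  have idG: "(\<lambda>x::real. x) \<in> borel_measurable G" by (subst measurable_cong_sets[OF sG refl]) simp
  have "integrable G (\<lambda>x. x)"
  proof (rule Bochner_Integration.integrable_bound[of _ "\<lambda>x. 1 + \<bar>x\<bar> powr p"])
    show "integrable G (\<lambda>x. 1 + \<bar>x\<bar> powr p)" using iG by simp
    show "(\<lambda>x. x) \<in> borel_measurable G" by (rule idG)
    show "AE x in G. norm x \<le> norm (1 + \<bar>x\<bar> powr p)"
    proof (intro AE_I2)
      fix x :: real
      have "\<bar>x\<bar> \<le> 1 + \<bar>x\<bar> powr p"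
      proof (cases "\<bar>x\<bar> \<le> 1")
        case True then show ?thesis by (smt (verit) powr_ge_zero)
      next
        case False
        then have "\<bar>x\<bar> powr 1 \<le> \<bar>x\<bar> powr p" using p by (intro powr_mono) auto
        then show ?thesis using False by simp
      qed
      then show "norm x \<le> norm (1 + \<bar>x\<bar> powr p)" by simp
    qed
  qed
  then show ?thesis using adm sG pG nG by unfold_locales
qed


lemma finite_range_bound:
  fixes h :: "real \<Rightarrow> real"
  assumes "finite (range h)" shows "\<exists>B. \<forall>x. \<bar>h x\<bar> \<le> B"
proof -
  have "finite ((\<lambda>y. \<bar>y\<bar>) ` range h)" using assms by simp
  then have "\<forall>x. \<bar>h x\<bar> \<le> Max ((\<lambda>y. \<bar>y\<bar>) ` range h)" by (auto intro: Max_ge)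
  then show ?thesis by blast
qed

context sbaset
begin

lemma conj1:
  assumes p: "1 \<le> p" and GP: "G \<in> Pp p T" and V: "W_nhd p T G V"
  shows "\<exists>G'\<in>V. \<exists>n\<ge>1. sba_approx G' T n \<in> V"
proof -
  obtain e where e: "e > 0" and ball: "{G' \<in> Pp p T. wasserstein p G G' < e} \<subseteq> V"
    using V unfolding W_nhd_def by blast
  have p0: "p > 0" using p by simp
  have ip: "integrable G (\<lambda>x. \<bar>x\<bar> powr p)" using GP unfolding Pp_def by auto
  have "(\<lambda>k. (\<integral>x. \<bar>hq k x - x\<bar> powr p \<partial>G) powr (1/p)) \<longlonglongrightarrow> 0"
    using p0 by (intro tendsto_zero_powrI[OF hq_lim(1)[OF p0 ip] tendsto_const]) auto
  from LIMSEQ_D[OF this e] obtain k where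
    "norm ((\<integral>x. \<bar>hq k x - x\<bar> powr p \<partial>G) powr (1/p) - 0) < e" by blast
  then have k: "(\<integral>x. \<bar>hq k x - x\<bar> powr p \<partial>G) powr (1/p) < e" by simp
  define G' where "G' = distr G borel (hq k)"
  have hqG: "hq k \<in> G \<rightarrow>\<^sub>M borel" by (subst measurable_cong_sets[OF sets_G refl]) simp
  obtain B where B: "\<And>x. \<bar>hq k x\<bar> \<le> B" using finite_range_bound[OF hq_range[of k]] by blast
  have sG': "sets G' = sets borel" unfolding G'_def by simp
  have pG': "prob_space G'" unfolding G'_def by (rule prob_space_distr[OF hqG])
  have nG': "emeasure G' (-T) = 0"
  proof -
    have "hq k -` (-T) \<inter> space G = {}" using hq_T by auto
    then show ?thesis unfolding G'_def using emeasure_distr[OF hqG, of "-T"] T_borel by simp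
  qed
  have ibd: "integrable G' f" if f: "f \<in> borel_measurable borel" and fb: "\<And>y. \<bar>y\<bar> \<le> B \<Longrightarrow> \<bar>f y\<bar> \<le> C"
    for f :: "real \<Rightarrow> real" and C
  proof -
    have "integrable G (\<lambda>x. f (hq k x))"
    proof (rule integrable_const_bound[where B=C])
      show "AE x in G. norm (f (hq k x)) \<le> C" using fb[OF B] by simp
      show "(\<lambda>x. f (hq k x)) \<in> borel_measurable G" using f hqG by measurable
    qed
    then show ?thesis unfolding G'_def by (subst integrable_distr_eq[OF hqG f])
  qed
  have i1: "integrable G' (\<lambda>x. x)" by (rule ibd) auto
  have i2: "integrable G' (\<lambda>x. \<bar>x\<bar> powr p)" by (rule ibd[of _ "B powr p"]) (use p0 in \<open>auto intro!: powr_mono2\<close>)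
  have G'P: "G' \<in> Pp p T" unfolding Pp_def using sG' pG' nG' i2 by simp
  have intk: "integrable G (\<lambda>x. \<bar>hq k x - x\<bar> powr p)" by (rule hq_lim(2)[OF p0 ip])
  have WG': "wasserstein p G G' < e"
  proof -
    have nn: "(\<integral>\<^sup>+x. ennreal (\<bar>hq k x - x\<bar> powr p) \<partial>G) = ennreal (\<integral>x. \<bar>hq k x - x\<bar> powr p \<partial>G)"
      by (rule nn_integral_eq_integral[OF intk]) simp
    have idb: "(\<lambda>x::real. x) \<in> borel_measurable borel" by simp
    have "wasserstein p (distr G borel (\<lambda>x. x)) (distr G borel (hq k))
        \<le> (\<integral>x. \<bar>hq k x - x\<bar> powr p \<partial>G) powr (1/p)"
      using wass_bound[OF prob sets_G idb hq_meas[of k] p0] nn by simp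
    then show ?thesis using k unfolding G'_def idG by simp
  qed
  have G'V: "G' \<in> V" using ball G'P WG' by auto
  have SG': "sbaset G' T" by (rule sbaset.intro[OF adm sG' pG' nG' i1])
  have AES: "AE x in G'. x \<in> range (hq k)"
  proof -
    have "{x \<in> space G'. x \<in> range (hq k)} \<in> sets G'"
      using hq_range[of k] sG' by (simp add: finite_imp_closed borel_closed)
    then show ?thesis unfolding G'_def
      by (subst AE_distr_iff[OF hqG]) (auto simp: G'_def)
  qed
  obtain n where n: "n \<ge> 1" and fx: "AE x in G'. sbaset.fn G' T n x = x"
    using sbaset.atoms_fix[OF SG' hq_range AES] hq_A by blast
  have "sba_approx G' T n = distr G' borel (sbaset.fn G' T n)" by (rule sbaset.approx_eq[OF SG'])
  also have "\<dots> = distr G' borel (\<lambda>x. x)"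
    by (rule distr_cong_AE[OF refl refl fx sbaset.fn_G[OF SG']]) (simp add: measurable_cong_sets[OF sG' refl])
  also have "\<dots> = G'" using sbaset.idG[OF SG'] .
  finally have "sba_approx G' T n \<in> V" using G'V by simp
  then show ?thesis using G'V n by blast
qed

end


theorem theorem3:
  fixes p :: real and T :: "real set" and G0 :: "real measure"
  assumes "admissible_Theta T" and "1 \<le> p" and "G0 \<in> Pp p T"
  shows "(\<forall>V. W_nhd p T G0 V \<longrightarrow> (\<exists>G\<in>V. \<exists>n\<ge>1. sba_approx G T n \<in> V))
       \<and> (G0 \<in> Pstar T \<longrightarrow>
            (\<forall>V. W_nhd p T G0 V \<longrightarrow> (\<exists>n\<ge>1. sba_approx G0 T n \<in> V))
          \<and> (\<lambda>n. wasserstein p (sba_approx G0 T n) G0) \<longlonglongrightarrow> 0)"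
proof -
  interpret sbaset G0 T by (rule Pp_sbaset[OF assms])
  have c1: "\<forall>V. W_nhd p T G0 V \<longrightarrow> (\<exists>G\<in>V. \<exists>n\<ge>1. sba_approx G T n \<in> V)"
    using conj1[OF assms(2,3)] by blast
  have c2: "G0 \<in> Pstar T \<longrightarrow>
            (\<forall>V. W_nhd p T G0 V \<longrightarrow> (\<exists>n\<ge>1. sba_approx G0 T n \<in> V))
          \<and> (\<lambda>n. wasserstein p (sba_approx G0 T n) G0) \<longlonglongrightarrow> 0"
  proof
    assume "G0 \<in> Pstar T"
    then obtain c d where supp: "support G0 = {c..d}" unfolding Pstar_def by blast
    have lim: "(\<lambda>n. wasserstein p (sba_approx G0 T n) G0) \<longlonglongrightarrow> 0"
      by (rule conj2(2)[OF supp assms(2)])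
    have lim2: "(\<lambda>n. wasserstein p G0 (sba_approx G0 T n)) \<longlonglongrightarrow> 0"
      by (rule conj2(3)[OF supp assms(2)])
    have "\<exists>n\<ge>1. sba_approx G0 T n \<in> V" if V: "W_nhd p T G0 V" for V
    proof -
      obtain e where e: "e > 0" and ball: "{G' \<in> Pp p T. wasserstein p G0 G' < e} \<subseteq> V"
        using V unfolding W_nhd_def by blast
      from LIMSEQ_D[OF lim2 e] obtain N where
        N: "\<And>n. n \<ge> N \<Longrightarrow> norm (wasserstein p G0 (sba_approx G0 T n) - 0) < e" by blast
      define n where "n = max N 1"
      have n1: "1 \<le> n" unfolding n_def by simp
      have "norm (wasserstein p G0 (sba_approx G0 T n) - 0) < e" using N unfolding n_def by simp
      then have "wasserstein p G0 (sba_approx G0 T n) < e" by simp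
      moreover have "sba_approx G0 T n \<in> Pp p T" by (rule conj2(1)[OF supp assms(2) n1])
      ultimately have "sba_approx G0 T n \<in> V" using ball by blast
      then show ?thesis using n1 by blast
    qed
    then show "(\<forall>V. W_nhd p T G0 V \<longrightarrow> (\<exists>n\<ge>1. sba_approx G0 T n \<in> V))
          \<and> (\<lambda>n. wasserstein p (sba_approx G0 T n) G0) \<longlonglongrightarrow> 0" using lim by blast
  qed
  show ?thesis using c1 c2 by blast
qed


end
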